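(* Consider the problem $\min_{x\in\mathbb{R}^d}F(x)$ with $F(x)=f_A(x)+\sum_{i=1}^d\psi_i(x^{(i)})$, under the assumptions in the context, and let $\theta^\star$ be a minimizer of $F$. If $S^2\ge \frac{M_iR_i}{p_i^2}$ for all $i$ and $1-\beta_t-\frac{\alpha_tR_i}{p_i}\ge0$ for all $i$ and $t$, then the sequences $(v_t),(x_t)$ generated by the generalized APCG algorithm satisfy, for all $t$, $$B_t\,\mathbb{E}\big[\|v_t-\theta^\star\|^2_{A^\dagger A}\big]+2A_t\big[\mathbb{E}[F(x_t)]-F(\theta^\star)\big]\le C_0,$$ where $C_0=B_0\|v_0-\theta^\star\|^2+2A_0[F(x_0)-F(\theta^\star)]$.
   Context: Setting. $A$ is a matrix with $d$ columns, $A^\dagger$ its pseudo-inverse, $\|u\|^2_{A^\dagger A}=u^TA^\dagger Au$, $e_i$ the unit vectors of $\mathbb{R}^d$, $x^{(i)}=e_i^Tx$, $R_i=e_i^TA^\dagger Ae_i$. Each $\psi_i:\mathbb{R}\to\mathbb{R}\cup\{+\infty\}$ is convex. $f_A:\mathbb{R}^d\to\mathbb{R}$ is differentiable and there is $\sigma_A\ge0$ with $f_A(x)-f_A(y)\ge\nabla f_A(y)^TA^\dagger A(x-y)+\frac{\sigma_A}{2}(x-y)^TA^\dagger A(x-y)$ for all $x,y$. $\nabla_if_A=e_ie_i^T\nabla f_A$, and $f_A$ is $M_i$-smooth in direction $i$ (its partial derivative along $e_i$ is $M_i$-Lipschitz along $e_i$). For every $i$, either $R_i=1$ or $\psi_i=0$.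 Coordinate $i$ is sampled with probability $p_i>0$, $\sum_ip_i=1$. Sequences. Fix $A_0\ge0$, $B_0>0$ and $S>0$; recursively $a_{t+1}>0$ solves $a_{t+1}^2S^2=A_{t+1}B_{t+1}$ with $A_{t+1}=A_t+a_{t+1}$, $B_{t+1}=B_t+\sigma_Aa_{t+1}$; $\alpha_t=a_{t+1}/A_{t+1}$, $\beta_t=\sigma_Aa_{t+1}/B_{t+1}$, $\eta_{i,t}=\frac{a_{t+1}}{B_{t+1}p_i}$, ${\rm prox}_{\eta\psi_i}(x)=\arg\min_v\frac{1}{2\eta}\|v-x\|^2+\psi_i(v)$. Generalized APCG. $x_0=v_0=0$. For $t=0,1,\dots$: $y_t=\frac{(1-\alpha_t)x_t+\alpha_t(1-\beta_t)v_t}{1-\alpha_t\beta_t}$; sample $i$ with probability $p_i$ independently of the past; $z_{t+1}=v_{t+1}=(1-\beta_t)v_t+\beta_ty_t-\eta_{i,t}\nabla_if_A(y_t)$; replace $v_{t+1}^{(i)}={\rm prox}_{\eta_{i,t}\psi_i}(z_{t+1}^{(i)})$; $x_{t+1}=y_t+\frac{\alpha_tR_i}{p_i}\big(v_{t+1}-(1-\beta_t)v_t-\beta_ty_t\big)$. *)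

theory Defs
  imports "HOL-Analysis.Analysis" "HOL-Library.Extended_Real"
begin

definition pseudo_inverse :: "real^'d^'m \<Rightarrow> real^'m^'d" where
  "pseudo_inverse A = (THE X. A ** X ** A = A \<and> X ** A ** X = X \<and>
       transpose (A ** X) = A ** X \<and> transpose (X ** A) = X ** A)"

definition sqnorm_P :: "real^'d^'d \<Rightarrow> real^'d \<Rightarrow> real" where
  "sqnorm_P P u = u \<bullet> (P *v u)"

definition convex_ext :: "(real \<Rightarrow> ereal) \<Rightarrow> bool" where
  "convex_ext \<psi> \<longleftrightarrow> (\<forall>x. \<psi> x \<noteq> -\<infinity>) \<and>
     (\<forall>x y u. 0 \<le> u \<and> u \<le> 1 \<longrightarrow>
        \<psi> (u * x + (1 - u) * y) \<le> ereal u * \<psi> x + ereal (1 - u) * \<psi> y)"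

definition is_prox :: "real \<Rightarrow> (real \<Rightarrow> ereal) \<Rightarrow> real \<Rightarrow> real \<Rightarrow> bool" where
  "is_prox \<eta> \<psi> x v \<longleftrightarrow>
     (\<forall>u. ereal (1 / (2 * \<eta>) * (v - x)^2) + \<psi> v \<le> ereal (1 / (2 * \<eta>) * (u - x)^2) + \<psi> u)"

definition prox :: "real \<Rightarrow> (real \<Rightarrow> ereal) \<Rightarrow> real \<Rightarrow> real" where
  "prox \<eta> \<psi> x = (SOME v. is_prox \<eta> \<psi> x v)"

text \<open>One step (iteration t, sampled coordinate i) of generalized APCG.
  Parameters: gradient of f_A, P = A^\<dagger> A, probabilities p, \<psi>, sequences a, A_t, B_t, \<sigma>_A.\<close>
definition apcg_step ::
  "(real^'d \<Rightarrow> real^'d) \<Rightarrow> real^'d^'d \<Rightarrow> ('d \<Rightarrow> real) \<Rightarrow> ('d \<Rightarrow> real \<Rightarrow> ereal) \<Rightarrow>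
   (nat \<Rightarrow> real) \<Rightarrow> (nat \<Rightarrow> real) \<Rightarrow> (nat \<Rightarrow> real) \<Rightarrow> real \<Rightarrow>
   nat \<Rightarrow> 'd \<Rightarrow> (real^'d) \<times> (real^'d) \<Rightarrow> (real^'d) \<times> (real^'d)" where
  "apcg_step grad P p \<psi> a As Bs \<sigma> t i xv =
    (let x = fst xv; v = snd xv;
         \<alpha> = a (Suc t) / As (Suc t);
         \<beta> = \<sigma> * a (Suc t) / Bs (Suc t);
         \<eta> = a (Suc t) / (Bs (Suc t) * p i);
         y = (1 / (1 - \<alpha> * \<beta>)) *\<^sub>R ((1 - \<alpha>) *\<^sub>R x + (\<alpha> * (1 - \<beta>)) *\<^sub>R v);
         w = (1 - \<beta>) *\<^sub>R v + \<beta> *\<^sub>R y;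
         z = w - (\<eta> * (grad y $ i)) *\<^sub>R axis i 1;
         v' = (\<chi> j. if j = i then prox \<eta> (\<psi> i) (z $ i) else z $ j);
         x' = y + (\<alpha> * (P $ i $ i) / p i) *\<^sub>R (v' - w)
     in (x', v'))"

text \<open>Trajectory (x_t, v_t) for a realisation \<omega> of the sampled indices (\<omega> t = index drawn at step t).\<close>
primrec apcg_run ::
  "(real^'d \<Rightarrow> real^'d) \<Rightarrow> real^'d^'d \<Rightarrow> ('d \<Rightarrow> real) \<Rightarrow> ('d \<Rightarrow> real \<Rightarrow> ereal) \<Rightarrow>
   (nat \<Rightarrow> real) \<Rightarrow> (nat \<Rightarrow> real) \<Rightarrow> (nat \<Rightarrow> real) \<Rightarrow> real \<Rightarrow>
   (nat \<Rightarrow> 'd) \<Rightarrow> nat \<Rightarrow> (real^'d) \<times> (real^'d)" where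
  "apcg_run grad P p \<psi> a As Bs \<sigma> \<omega> 0 = (0, 0)"
| "apcg_run grad P p \<psi> a As Bs \<sigma> \<omega> (Suc t) =
     apcg_step grad P p \<psi> a As Bs \<sigma> t (\<omega> t) (apcg_run grad P p \<psi> a As Bs \<sigma> \<omega> t)"

definition path_prob :: "('d \<Rightarrow> real) \<Rightarrow> nat \<Rightarrow> (nat \<Rightarrow> 'd) \<Rightarrow> real" where
  "path_prob p t \<omega> = (\<Prod>j<t. p (\<omega> j))"

definition paths :: "nat \<Rightarrow> (nat \<Rightarrow> 'd) set" where
  "paths t = PiE {..<t} (\<lambda>_. UNIV)"

end

theory Submission
  imports Defs
begin


lemma transp_dot: "((transpose M) *v x) \<bullet> y = x \<bullet> (M *v (y::real^'n))"
  for M :: "real^'n^'m"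
  by (simp add: dot_lmul_matrix)

lemma vec_eq_by_inner: "(\<And>y. (x::real^'n) \<bullet> y = z \<bullet> y) \<Longrightarrow> x = z"
  by (metis inner_diff_left right_minus_eq inner_eq_zero_iff)

lemma symm_by_inner:
  fixes M :: "real^'n^'n"
  assumes "\<And>x y. (M *v x) \<bullet> y = x \<bullet> (M *v y)"
  shows "transpose M = M"
proof -
  have "transpose M *v x = M *v x" for x
    by (rule vec_eq_by_inner) (metis transp_dot assms inner_commute)
  then show ?thesis by (simp add: matrix_eq)
qed

lemma proj_exists:
  fixes T :: "'a::euclidean_space set"
  assumes "subspace T"
  shows "\<exists>pr. linear pr \<and> (\<forall>x. pr x \<in> T) \<and> (\<forall>x y. y \<in> T \<longrightarrow> (x - pr x) \<bullet> y = 0)"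
proof -
  have "\<exists>y z. y \<in> T \<and> (\<forall>w\<in>T. orthogonal z w) \<and> x = y + z" for x
    using orthogonal_subspace_decomp_exists[of T x] assms by (metis span_eq_iff)
  then obtain pr where pT: "\<And>x. pr x \<in> T" and po: "\<And>x w. w \<in> T \<Longrightarrow> (x - pr x) \<bullet> w = 0"
    by (metis add_diff_cancel_left' orthogonal_def)
  have uniq: "u = pr x" if "u \<in> T" "\<And>w. w \<in> T \<Longrightarrow> (x - u) \<bullet> w = 0" for u x
  proof -
    have d: "u - pr x \<in> T" using that(1) pT assms by (simp add: subspace_diff)
    have "(u - pr x) \<bullet> (u - pr x) = (x - pr x) \<bullet> (u - pr x) - (x - u) \<bullet> (u - pr x)"
      by (simp add: inner_diff_left)
    also have "\<dots> = 0" using po[OF d] that(2)[OF d] by simp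
    finally show ?thesis by simp
  qed
  have "linear pr"
  proof (rule linearI)
    fix x y
    show "pr (x + y) = pr x + pr y"
    proof (rule sym, rule uniq)
      show "pr x + pr y \<in> T" using pT assms by (simp add: subspace_add)
      fix w assume "w \<in> T"
      have "(x + y - (pr x + pr y)) \<bullet> w = (x - pr x) \<bullet> w + (y - pr y) \<bullet> w"
        by (simp add: algebra_simps inner_diff_left inner_add_left)
      then show "(x + y - (pr x + pr y)) \<bullet> w = 0" using po[OF \<open>w \<in> T\<close>] by simp
    qed
  next
    fix c x
    show "pr (c *\<^sub>R x) = c *\<^sub>R pr x"
    proof (rule sym, rule uniq)
      show "c *\<^sub>R pr x \<in> T" using pT assms by (simp add: subspace_scale)
      fix w assume "w \<in> T"
      have "(c *\<^sub>R x - c *\<^sub>R pr x) \<bullet> w = c * ((x - pr x) \<bullet> w)"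
        by (simp add: algebra_simps inner_diff_left)
      then show "(c *\<^sub>R x - c *\<^sub>R pr x) \<bullet> w = 0" using po[OF \<open>w \<in> T\<close>] by simp
    qed
  qed
  with pT po show ?thesis by blast
qed



lemma matrix_works_real: "linear f \<Longrightarrow> matrix f *v x = f (x::real^'n)"
  by (simp add: matrix_works)

lemma subspace_range_mat: "subspace (range (\<lambda>x. (M::real^'n^'m) *v x))"
  unfolding subspace_def
  by (auto simp: image_iff matrix_vector_right_distrib matrix_vector_mult_scaleR)
     (metis matrix_vector_mult_0_right, metis matrix_vector_right_distrib, metis matrix_vector_mult_scaleR)

lemma proj_sym:
  assumes pT: "\<And>x. pr x \<in> T" and po: "\<And>x y. y \<in> T \<Longrightarrow> (x - pr x) \<bullet> y = 0"
  shows "(pr x) \<bullet> y = x \<bullet> (pr y)"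
proof -
  have h1: "(y - pr y) \<bullet> pr x = 0" using po[OF pT[of x]] .
  hence "y \<bullet> pr x = pr y \<bullet> pr x" by (simp add: inner_diff_left)
  hence "(pr x) \<bullet> y = (pr x) \<bullet> (pr y)" by (simp add: inner_commute)
  moreover have h2: "(x - pr x) \<bullet> pr y = 0" using po[OF pT[of y]] .
  hence "x \<bullet> pr y = pr x \<bullet> pr y" by (simp add: inner_diff_left)
  moreover note this
  ultimately show ?thesis by simp
qed

lemma proj_id:
  assumes "subspace T" and pT: "\<And>x. pr x \<in> T" and po: "\<And>x y. y \<in> T \<Longrightarrow> (x - pr x) \<bullet> y = 0"
    and "u \<in> T"
  shows "pr u = u"
proof -
  have "pr u - u \<in> T" using assms by (simp add: subspace_diff)
  from po[OF this, of u] have "(u - pr u) \<bullet> (u - pr u) = 0"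
    by (simp add: inner_diff_right inner_commute algebra_simps)
  then show ?thesis by simp
qed

lemma mp_exists:
  fixes A :: "real^'d^'m"
  shows "\<exists>X. A ** X ** A = A \<and> X ** A ** X = X \<and> transpose (A ** X) = A ** X \<and> transpose (X ** A) = X ** A"
proof -
  define T1 where "T1 = range (\<lambda>y. transpose A *v y)"
  define T2 where "T2 = range (\<lambda>x. A *v x)"
  have s1: "subspace T1" unfolding T1_def by (rule subspace_range_mat)
  have s2: "subspace T2" unfolding T2_def by (rule subspace_range_mat)
  have sp1: "span T1 = T1" using s1 by (simp add: span_eq_iff)
  obtain p2 where p2l: "linear p2" and p2T: "\<And>x. p2 x \<in> T2" and p2o: "\<And>x y. y \<in> T2 \<Longrightarrow> (x - p2 x) \<bullet> y = 0"
    using proj_exists[OF s2] by blast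
  obtain p1 where p1l: "linear p1" and p1T: "\<And>x. p1 x \<in> T1" and p1o: "\<And>x y. y \<in> T1 \<Longrightarrow> (x - p1 x) \<bullet> y = 0"
    using proj_exists[OF s1] by blast
  have kerorth: "z \<bullet> u = 0" if kz: "A *v z = 0" and uT: "u \<in> T1" for z u
  proof -
    obtain y where u: "u = transpose A *v y" using uT unfolding T1_def by blast
    have "z \<bullet> u = (transpose A *v y) \<bullet> z" by (simp add: u inner_commute)
    also have "\<dots> = y \<bullet> (A *v z)" by (rule transp_dot)
    finally show ?thesis using kz by simp
  qed
  have orthker: "A *v z = 0" if oz: "\<And>u. u \<in> T1 \<Longrightarrow> z \<bullet> u = 0" for z
  proof -
    have "y \<bullet> (A *v z) = 0" for y
      using oz[of "transpose A *v y"] transp_dot[of A y z] unfolding T1_def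
      by (simp add: inner_commute)
    then show ?thesis by (metis inner_eq_zero_iff)
  qed
  have Ap1: "A *v (p1 x) = A *v x" for x
  proof -
    have "A *v (x - p1 x) = 0" by (rule orthker) (rule p1o)
    then show ?thesis by (simp add: matrix_vector_mult_diff_distrib)
  qed
  have inj: "inj_on (\<lambda>x. A *v x) (span T1)"
  proof (rule inj_onI)
    fix u u' assume "u \<in> span T1" "u' \<in> span T1" "A *v u = A *v u'"
    then have "u - u' \<in> T1" "A *v (u - u') = 0"
      using s1 sp1 by (auto simp: subspace_diff matrix_vector_mult_diff_distrib)
    then have "(u - u') \<bullet> (u - u') = 0" using kerorth by blast
    then show "u = u'" by simp
  qed
  obtain g where gr: "range g \<subseteq> span T1" and gl: "linear g" and gi: "\<And>x. x \<in> span T1 \<Longrightarrow> g (A *v x) = x"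
    using linear_inj_on_left_inverse[OF matrix_vector_mul_linear inj] by blast
  have gA: "g (A *v x) = p1 x" for x
    using gi[of "p1 x"] p1T[of x] sp1 Ap1[of x] by simp
  define X where "X = matrix (g \<circ> p2)"
  have Xv: "X *v b = g (p2 b)" for b
    unfolding X_def by (simp add: matrix_works_real linear_compose[OF p2l gl])
  have XA: "(X ** A) *v x = p1 x" for x
  proof -
    have "p2 (A *v x) = A *v x"
      by (rule proj_id[OF s2 p2T p2o]) (auto simp: T2_def)
    then show ?thesis by (simp add: Xv gA flip: matrix_vector_mul_assoc)
  qed
  have AX: "(A ** X) *v b = p2 b" for b
  proof -
    obtain x where x: "p2 b = A *v x" using p2T[of b] unfolding T2_def by blast
    show ?thesis by (simp add: Xv x gA Ap1 flip: matrix_vector_mul_assoc)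
  qed
  have p1p1: "p1 (p1 x) = p1 x" for x by (rule proj_id[OF s1 p1T p1o p1T])
  have e1: "A ** X ** A = A"
    unfolding matrix_eq using XA by (simp add: Ap1 flip: matrix_vector_mul_assoc)
  have e2: "X ** A ** X = X"
    unfolding matrix_eq
  proof
    fix b
    have gb: "g (p2 b) \<in> T1" using gr sp1 by auto
    have pg: "p1 (g (p2 b)) = g (p2 b)" using proj_id[OF s1 p1T p1o gb] .
    have "X ** A ** X *v b = (X ** A) *v (X *v b)" by (simp add: matrix_vector_mul_assoc)
    also have "\<dots> = p1 (g (p2 b))" by (simp only: XA Xv)
    finally show "X ** A ** X *v b = X *v b" using pg Xv by simp
  qed
  have e3: "transpose (A ** X) = A ** X"
    by (rule symm_by_inner) (simp add: AX proj_sym[OF p2T p2o])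
  have e4: "transpose (X ** A) = X ** A"
    by (rule symm_by_inner) (simp add: XA proj_sym[OF p1T p1o])
  show ?thesis using e1 e2 e3 e4 by blast
qed



lemma mp_unique:
  fixes A :: "real^'d^'m"
  assumes x1: "A ** X ** A = A" and x2: "X ** A ** X = X" and x3: "transpose (A ** X) = A ** X" and x4: "transpose (X ** A) = X ** A"
      and y1: "A ** Y ** A = A" and y2: "Y ** A ** Y = Y" and y3: "transpose (A ** Y) = A ** Y" and y4: "transpose (Y ** A) = Y ** A"
  shows "X = Y"
proof -
  have tA1: "transpose A = transpose A ** (A ** Y)"
    by (metis y1 y3 matrix_transpose_mul matrix_mul_assoc)
  have tA2: "transpose A = (X ** A) ** transpose A"
    by (metis x1 x4 matrix_transpose_mul matrix_mul_assoc)
  have "X = X ** (A ** X)" using x2 by (simp add: matrix_mul_assoc)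
  also have "\<dots> = X ** transpose X ** transpose A" using x3 by (metis matrix_transpose_mul matrix_mul_assoc)
  also have "\<dots> = X ** transpose X ** transpose A ** (A ** Y)" using tA1 by (metis matrix_mul_assoc)
  also have "\<dots> = X ** transpose (A ** X) ** (A ** Y)" by (simp add: matrix_transpose_mul matrix_mul_assoc)
  also have "\<dots> = (X ** A ** X) ** A ** Y" using x3 by (simp add: matrix_mul_assoc)
  also have "\<dots> = X ** A ** Y" using x2 by simp
  finally have eX: "X = X ** A ** Y" .
  have "Y = (Y ** A) ** Y" using y2 by simp
  also have "\<dots> = transpose A ** transpose Y ** Y" using y4 by (metis matrix_transpose_mul)
  also have "\<dots> = (X ** A) ** transpose A ** transpose Y ** Y" using tA2 by (metis matrix_mul_assoc)
  also have "\<dots> = (X ** A) ** transpose (Y ** A) ** Y" by (simp add: matrix_transpose_mul matrix_mul_assoc)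
  also have "\<dots> = X ** A ** (Y ** A ** Y)" using y4 by (simp add: matrix_mul_assoc)
  also have "\<dots> = X ** A ** Y" using y2 by simp
  finally show ?thesis using eX by simp
qed

lemma pinv_props:
  fixes A :: "real^'d^'m"
  defines "X \<equiv> pseudo_inverse A"
  shows "A ** X ** A = A \<and> X ** A ** X = X \<and> transpose (A ** X) = A ** X \<and> transpose (X ** A) = X ** A"
proof -
  have "\<exists>!X. A ** X ** A = A \<and> X ** A ** X = X \<and> transpose (A ** X) = A ** X \<and> transpose (X ** A) = X ** A"
    using mp_exists[of A] mp_unique[of A] by metis
  then show ?thesis unfolding X_def pseudo_inverse_def by (rule theI')
qed

locale projP =
  fixes P :: "real^'d^'d"
  assumes Psym: "transpose P = P" and Pidem: "P ** P = P"
begin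

lemma Pswap: "u \<bullet> (P *v w) = (P *v u) \<bullet> w"
  by (metis transp_dot Psym)

lemma PPv: "P *v (P *v u) = P *v u"
  by (simp add: matrix_vector_mul_assoc Pidem)

lemma sq_eq: "sqnorm_P P u = (P *v u) \<bullet> (P *v u)"
  unfolding sqnorm_P_def by (metis Pswap PPv)

lemma sq_nonneg: "sqnorm_P P u \<ge> 0"
  by (simp add: sq_eq)

lemma sq_le_norm: "sqnorm_P P u \<le> (norm u)^2"
proof -
  have o: "(P *v u) \<bullet> (u - P *v u) = 0"
    by (simp add: inner_diff_right) (metis Pswap PPv inner_commute)
  have o': "(P *v u) \<bullet> u = (P *v u) \<bullet> (P *v u)" using o by (simp add: inner_diff_right)
  have "(u - P *v u) \<bullet> (u - P *v u) = u \<bullet> u - 2 * ((P *v u) \<bullet> u) + (P *v u) \<bullet> (P *v u)"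
    by (simp add: inner_diff_left inner_diff_right inner_commute)
  moreover have "(u - P *v u) \<bullet> (u - P *v u) \<ge> 0" by simp
  ultimately have "u \<bullet> u \<ge> (P *v u) \<bullet> (P *v u)" using o' by linarith
  then show ?thesis by (simp add: sq_eq power2_norm_eq_inner)
qed

lemma diag_eq: "P $ i $ i = sqnorm_P P (axis i 1)"
  unfolding sqnorm_P_def by (simp add: inner_axis' matrix_vector_mult_basis column_def)

lemma diag_nonneg: "P $ i $ i \<ge> 0"
  by (simp add: diag_eq sq_nonneg)

lemma Pe: assumes "P $ i $ i = 1" shows "P *v axis i 1 = axis i 1"
proof -
  have a: "(P *v axis i 1) \<bullet> (P *v axis i 1) = 1" using assms by (simp add: diag_eq sq_eq)
  have b: "axis i 1 \<bullet> (P *v axis i (1::real)) = 1" using assms diag_eq unfolding sqnorm_P_def by simp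
  have "(axis i 1 - P *v axis i 1) \<bullet> (axis i 1 - P *v axis i (1::real)) = 0"
    using a b by (simp add: inner_diff_left inner_diff_right inner_commute inner_axis_axis)
  then show ?thesis by simp
qed

lemma Pcomp: assumes "P $ i $ i = 1" shows "(P *v z) $ i = z $ i"
proof -
  have "(P *v z) $ i = (P *v z) \<bullet> axis i 1" by (simp add: inner_axis)
  also have "\<dots> = z \<bullet> (P *v axis i 1)" by (simp add: Pswap)
  also have "\<dots> = z $ i" using Pe[OF assms] by (simp add: inner_axis)
  finally show ?thesis .
qed

lemma sq_add_axis:
  "sqnorm_P P (w + d *\<^sub>R axis i 1) = sqnorm_P P w + 2 * d * (P *v w) $ i + d^2 * P $ i $ i"
proof -
  have e1: "w \<bullet> (P *v axis i 1) = (P *v w) $ i" by (simp add: Pswap inner_axis)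
  have e2: "axis i 1 \<bullet> (P *v w) = (P *v w) $ i" by (simp add: inner_axis')
  show ?thesis
    unfolding sqnorm_P_def diag_eq
    by (simp add: matrix_vector_right_distrib matrix_vector_mult_scaleR inner_add_left inner_add_right
        e1 e2 power2_eq_square algebra_simps)
qed

lemma sq_conv:
  assumes "0 \<le> b" "b \<le> 1"
  shows "sqnorm_P P ((1 - b) *\<^sub>R u + b *\<^sub>R v) \<le> (1 - b) * sqnorm_P P u + b * sqnorm_P P v"
proof -
  let ?U = "P *v u" and ?V = "P *v v"
  have "P *v ((1 - b) *\<^sub>R u + b *\<^sub>R v) = (1 - b) *\<^sub>R ?U + b *\<^sub>R ?V"
    by (simp add: matrix_vector_right_distrib matrix_vector_mult_scaleR)
  then have "(1 - b) * sqnorm_P P u + b * sqnorm_P P v - sqnorm_P P ((1 - b) *\<^sub>R u + b *\<^sub>R v)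
     = b * (1 - b) * ((?U - ?V) \<bullet> (?U - ?V))"
    by (simp add: sq_eq inner_add_left inner_add_right inner_diff_left inner_diff_right inner_commute algebra_simps)
  moreover have "b * (1 - b) * ((?U - ?V) \<bullet> (?U - ?V)) \<ge> 0" using assms by simp
  ultimately show ?thesis by linarith
qed

end

lemma P_projP:
  fixes A :: "real^'d^'m"
  shows "projP (pseudo_inverse A ** A)"
proof
  let ?X = "pseudo_inverse A"
  from pinv_props[of A] have h: "?X ** A ** ?X = ?X" "transpose (?X ** A) = ?X ** A" by auto
  show "transpose (?X ** A) = ?X ** A" by (fact h(2))
  show "?X ** A ** (?X ** A) = ?X ** A" using h(1) by (simp add: matrix_mul_assoc)
qed



lemma line_deriv:
  fixes f :: "real^'d \<Rightarrow> real"
  assumes grad: "\<And>x. (f has_derivative (\<lambda>h. grad x \<bullet> h)) (at x)"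
  shows "((\<lambda>s. f (y + s *\<^sub>R axis i 1)) has_real_derivative (grad (y + s *\<^sub>R axis i 1) $ i)) (at s)"
proof -
  have l: "((\<lambda>s. y + s *\<^sub>R axis i 1) has_derivative (\<lambda>s. s *\<^sub>R axis i 1)) (at s)"
    by (auto intro!: derivative_eq_intros)
  have "((\<lambda>s. f (y + s *\<^sub>R axis i 1)) has_derivative (\<lambda>h. grad (y + s *\<^sub>R axis i 1) \<bullet> (h *\<^sub>R axis i 1))) (at s)"
    using has_derivative_compose[OF l grad] .
  moreover have "(\<lambda>h. grad (y + s *\<^sub>R axis i 1) \<bullet> (h *\<^sub>R axis i 1)) = (*) (grad (y + s *\<^sub>R axis i 1) $ i)"
    by (auto simp: inner_axis)
  ultimately show ?thesis by (simp add: has_field_derivative_def)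
qed

lemma descent:
  fixes f :: "real^'d \<Rightarrow> real"
  assumes grad: "\<And>x. (f has_derivative (\<lambda>h. grad x \<bullet> h)) (at x)"
    and smooth: "\<And>x h. \<bar>grad (x + h *\<^sub>R axis i 1) $ i - grad x $ i\<bar> \<le> M * \<bar>h\<bar>"
  shows "f (y + h *\<^sub>R axis i 1) \<le> f y + h * grad y $ i + M / 2 * h^2"
proof -
  define g0 where "g0 = grad y $ i"
  define k where "k s = f (y + s *\<^sub>R axis i 1) - s * g0 - M / 2 * s^2" for s
  have dk: "(k has_real_derivative (grad (y + s *\<^sub>R axis i 1) $ i - g0 - M * s)) (at s)" for s
    unfolding k_def
    by (auto intro!: derivative_eq_intros line_deriv[OF grad])
  have sm: "\<bar>grad (y + s *\<^sub>R axis i 1) $ i - g0\<bar> \<le> M * \<bar>s\<bar>" for s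
    unfolding g0_def using smooth[of y s] .
  have "k h \<le> k 0"
  proof (cases "h \<ge> 0")
    case True
    show ?thesis
    proof (rule DERIV_nonpos_imp_nonincreasing[OF True])
      fix s assume "0 \<le> s" "s \<le> h"
      then show "\<exists>y. DERIV k s :> y \<and> y \<le> 0"
        using dk[of s] sm[of s] by (intro exI[of _ "grad (y + s *\<^sub>R axis i 1) $ i - g0 - M * s"]) auto
    qed
  next
    case False
    show ?thesis
    proof (rule DERIV_nonneg_imp_nondecreasing[of h 0 k])
      show "h \<le> 0" using False by simp
      fix s assume "h \<le> s" "s \<le> 0"
      then show "\<exists>y. DERIV k s :> y \<and> y \<ge> 0"
        using dk[of s] sm[of s] by (intro exI[of _ "grad (y + s *\<^sub>R axis i 1) $ i - g0 - M * s"]) auto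
    qed
  qed
  then show ?thesis by (simp add: k_def g0_def)
qed

lemma M_nonneg:
  assumes smooth: "\<And>x h. \<bar>grad (x + h *\<^sub>R axis i 1) $ i - grad x $ i\<bar> \<le> M * \<bar>h\<bar>"
  shows "M \<ge> 0"
  using smooth[of x 1] by simp



lemma ereal_fin: "x \<noteq> \<infinity> \<Longrightarrow> x \<noteq> -\<infinity> \<Longrightarrow> x = ereal (real_of_ereal x)"
  by (cases x) auto

lemma small_param:
  fixes D c :: real
  assumes "c \<ge> 0" "\<And>s. 0 < s \<Longrightarrow> s \<le> 1 \<Longrightarrow> D \<le> s * c"
  shows "D \<le> 0"
proof (rule ccontr)
  assume "\<not> D \<le> 0"
  then have D: "D > 0" by simp
  define s where "s = D / (D + c)"
  have s0: "0 < s" "s \<le> 1" using D assms(1) by (auto simp: s_def field_simps)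
  have "s * c < D" using D assms(1) by (simp add: s_def field_simps)
  with assms(2)[OF s0] show False by simp
qed

lemma prox_three_point:
  assumes conv: "convex_ext \<psi>" and prx: "is_prox \<eta> \<psi> z v" and eta: "\<eta> > 0" and fin: "\<psi> u \<noteq> \<infinity>"
  shows "\<psi> v \<noteq> \<infinity>"
    and "real_of_ereal (\<psi> v) + 1 / (2 * \<eta>) * (v - z)^2 + 1 / (2 * \<eta>) * (u - v)^2
         \<le> real_of_ereal (\<psi> u) + 1 / (2 * \<eta>) * (u - z)^2"
proof -
  have nm: "\<And>x. \<psi> x \<noteq> -\<infinity>" using conv unfolding convex_ext_def by blast
  have cv: "\<And>x y u. 0 \<le> u \<Longrightarrow> u \<le> 1 \<Longrightarrow> \<psi> (u * x + (1 - u) * y) \<le> ereal u * \<psi> x + ereal (1 - u) * \<psi> y"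
    using conv unfolding convex_ext_def by blast
  have pr: "\<And>w. ereal (1 / (2 * \<eta>) * (v - z)^2) + \<psi> v \<le> ereal (1 / (2 * \<eta>) * (w - z)^2) + \<psi> w"
    using prx unfolding is_prox_def by blast
  define Pu where "Pu = real_of_ereal (\<psi> u)"
  have eu: "\<psi> u = ereal Pu" unfolding Pu_def using fin nm by (rule ereal_fin)
  have "ereal (1 / (2 * \<eta>) * (v - z)^2) + \<psi> v \<le> ereal (1 / (2 * \<eta>) * (u - z)^2 + Pu)"
    using pr[of u] eu by simp
  then show vfin: "\<psi> v \<noteq> \<infinity>" by auto
  define Pv where "Pv = real_of_ereal (\<psi> v)"
  have ev: "\<psi> v = ereal Pv" unfolding Pv_def using vfin nm by (rule ereal_fin)
  let ?c = "(u - v)^2 / (2 * \<eta>)"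
  let ?D = "Pv - Pu - (v - z) * (u - v) / \<eta>"
  have "?D \<le> s * ?c" if s: "0 < s" "s \<le> 1" for s
  proof -
    define q where "q = s * u + (1 - s) * v"
    have c1: "\<psi> q \<le> ereal (s * Pu + (1 - s) * Pv)"
      using cv[of s u v] s eu ev unfolding q_def by simp
    then have "\<psi> q \<noteq> \<infinity>" by auto
    then have eq: "\<psi> q = ereal (real_of_ereal (\<psi> q))" using nm by (rule ereal_fin)
    have c2: "1 / (2 * \<eta>) * (v - z)^2 + Pv \<le> 1 / (2 * \<eta>) * (q - z)^2 + real_of_ereal (\<psi> q)"
      using pr[of q] ev eq by (metis plus_ereal.simps(1) ereal_less_eq(3))
    have c3: "real_of_ereal (\<psi> q) \<le> s * Pu + (1 - s) * Pv" using c1 eq by (metis ereal_less_eq(3))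
    define E where "E = ((q - z)^2 - (v - z)^2) / (2 * \<eta>)"
    have E1: "1 / (2 * \<eta>) * (q - z)^2 - 1 / (2 * \<eta>) * (v - z)^2 = E"
      unfolding E_def using eta by (simp add: diff_divide_distrib)
    have "(q - z)^2 - (v - z)^2 = 2 * s * (v - z) * (u - v) + s^2 * (u - v)^2"
      unfolding q_def by (simp add: power2_eq_square algebra_simps)
    then have E2a: "E = (2 * s * (v - z) * (u - v) + s^2 * (u - v)^2) / (2 * \<eta>)"
      unfolding E_def by simp
    have E2: "E = s * ((v - z) * (u - v) / \<eta> + s * ?c)"
      unfolding E2a using eta by (simp add: field_simps power2_eq_square)
    have "s * Pv \<le> s * Pu + E" using c2 c3 E1 by (simp add: algebra_simps)
    then have "s * Pv \<le> s * (Pu + (v - z) * (u - v) / \<eta> + s * ?c)"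
      using E2 by (simp add: algebra_simps)
    then have "Pv \<le> Pu + (v - z) * (u - v) / \<eta> + s * ?c" using s by simp
    then show ?thesis by simp
  qed
  then have "?D \<le> 0" using eta by (intro small_param[of ?c]) auto
  moreover have "(v - z) * (u - v) / \<eta> = ((u - z)^2 - (v - z)^2 - (u - v)^2) / (2 * \<eta>)"
    using eta by (simp add: field_simps power2_eq_square)
  moreover have "1 / (2 * \<eta>) * (u - z)^2 - 1 / (2 * \<eta>) * (v - z)^2 - 1 / (2 * \<eta>) * (u - v)^2
      = ((u - z)^2 - (v - z)^2 - (u - v)^2) / (2 * \<eta>)" by (simp add: diff_divide_distrib)
  ultimately show "real_of_ereal (\<psi> v) + 1 / (2 * \<eta>) * (v - z)^2 + 1 / (2 * \<eta>) * (u - v)^2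
         \<le> real_of_ereal (\<psi> u) + 1 / (2 * \<eta>) * (u - z)^2"
    unfolding Pv_def[symmetric] Pu_def[symmetric] by linarith
qed

lemma prox_is_prox:
  assumes "\<And>z. \<exists>v. is_prox \<eta> \<psi> z v"
  shows "is_prox \<eta> \<psi> z (prox \<eta> \<psi> z)"
  unfolding prox_def using assms by (rule someI_ex)

lemma prox_zero:
  assumes "\<eta> > 0"
  shows "prox \<eta> (\<lambda>_. 0) z = z"
proof -
  have ex: "is_prox \<eta> (\<lambda>_. 0) z z" unfolding is_prox_def using assms by simp
  have "is_prox \<eta> (\<lambda>_. 0) z (prox \<eta> (\<lambda>_. 0) z)" unfolding prox_def using ex by (rule someI)
  then have "ereal (1 / (2 * \<eta>) * (prox \<eta> (\<lambda>_. 0) z - z)^2) \<le> ereal (1 / (2 * \<eta>) * (z - z)^2)"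
    unfolding is_prox_def by (metis add.right_neutral)
  then have "1 / (2 * \<eta>) * (prox \<eta> (\<lambda>_. 0) z - z)^2 \<le> 0" by simp
  then have "(prox \<eta> (\<lambda>_. 0) z - z)^2 \<le> 0" using assms by (simp add: divide_le_0_iff)
  then show ?thesis by simp
qed



locale apcg_ctx =
  fixes A :: "real^'d::finite^'m::finite"
    and f :: "real^'d \<Rightarrow> real" and grad :: "real^'d \<Rightarrow> real^'d"
    and \<psi> :: "'d \<Rightarrow> real \<Rightarrow> ereal"
    and \<sigma> S :: real and M p :: "'d \<Rightarrow> real"
    and a As Bs :: "nat \<Rightarrow> real"
    and \<theta> :: "real^'d"
    and F :: "real^'d \<Rightarrow> ereal" and P :: "real^'d^'d" and R :: "'d \<Rightarrow> real"
  assumes P_def: "P = pseudo_inverse A ** A"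
    and R_def: "R = (\<lambda>i. P $ i $ i)"
    and F_def: "F = (\<lambda>x. ereal (f x) + (\<Sum>i\<in>UNIV. \<psi> i (x $ i)))"
    and grad: "\<And>x. (f has_derivative (\<lambda>h. grad x \<bullet> h)) (at x)"
    and sigma_nonneg: "\<sigma> \<ge> 0"
    and strong: "\<And>x y. f x - f y \<ge> grad y \<bullet> (P *v (x - y)) + \<sigma> / 2 * ((x - y) \<bullet> (P *v (x - y)))"
    and smooth: "\<And>i x h. \<bar>grad (x + h *\<^sub>R axis i 1) $ i - grad x $ i\<bar> \<le> M i * \<bar>h\<bar>"
    and psi_convex: "\<And>i. convex_ext (\<psi> i)"
    and prox_exists: "\<And>i \<eta> z. \<eta> > 0 \<Longrightarrow> \<exists>v. is_prox \<eta> (\<psi> i) z v"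
    and R_or_zero: "\<And>i. R i = 1 \<or> \<psi> i = (\<lambda>_. 0)"
    and p_pos: "\<And>i. p i > 0" and p_sum: "(\<Sum>i\<in>UNIV. p i) = 1"
    and A0: "As 0 \<ge> 0" and B0: "Bs 0 > 0" and S_pos: "S > 0"
    and a_pos: "\<And>t. a (Suc t) > 0"
    and a_eq: "\<And>t. (a (Suc t))^2 * S^2 = As (Suc t) * Bs (Suc t)"
    and As_rec: "\<And>t. As (Suc t) = As t + a (Suc t)"
    and Bs_rec: "\<And>t. Bs (Suc t) = Bs t + \<sigma> * a (Suc t)"
    and minimizer: "\<And>x. F \<theta> \<le> F x" and finite_min: "F \<theta> \<noteq> \<infinity>"
    and S_cond: "\<And>i. S^2 \<ge> M i * R i / (p i)^2"
    and step_cond: "\<And>i t. 1 - \<sigma> * a (Suc t) / Bs (Suc t) - (a (Suc t) / As (Suc t)) * R i / p i \<ge> 0"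
begin

interpretation PP: projP P unfolding P_def by (rule P_projP)

lemmas Pswap = PP.Pswap and sq_nonneg = PP.sq_nonneg and sq_le_norm = PP.sq_le_norm
  and diag_nonneg = PP.diag_nonneg and Pcomp = PP.Pcomp and sq_add_axis = PP.sq_add_axis
  and sq_conv = PP.sq_conv and Pe = PP.Pe

definition al where "al t = a (Suc t) / As (Suc t)"
definition be where "be t = \<sigma> * a (Suc t) / Bs (Suc t)"
definition eta where "eta t i = a (Suc t) / (Bs (Suc t) * p i)"
definition yv :: "nat \<Rightarrow> real^'d \<Rightarrow> real^'d \<Rightarrow> real^'d" where "yv t x v = (1 / (1 - al t * be t)) *\<^sub>R ((1 - al t) *\<^sub>R x + (al t * (1 - be t)) *\<^sub>R v)"
definition wv :: "nat \<Rightarrow> real^'d \<Rightarrow> real^'d \<Rightarrow> real^'d" where "wv t x v = (1 - be t) *\<^sub>R v + be t *\<^sub>R yv t x v"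
definition vt :: "nat \<Rightarrow> real^'d \<Rightarrow> real^'d \<Rightarrow> 'd \<Rightarrow> real" where "vt t x v j = prox (eta t j) (\<psi> j) (wv t x v $ j - eta t j * grad (yv t x v) $ j)"
definition vn :: "nat \<Rightarrow> real^'d \<Rightarrow> real^'d \<Rightarrow> 'd \<Rightarrow> real^'d" where "vn t x v i = (\<chi> j. if j = i then vt t x v i else wv t x v $ j)"
definition xn :: "nat \<Rightarrow> real^'d \<Rightarrow> real^'d \<Rightarrow> 'd \<Rightarrow> real^'d" where "xn t x v i = yv t x v + (al t * P $ i $ i / p i) *\<^sub>R (vn t x v i - wv t x v)"

definition psr where "psr j s = real_of_ereal (\<psi> j s)"

abbreviation run where "run \<omega> t \<equiv> apcg_run grad P p \<psi> a As Bs \<sigma> \<omega> t"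

lemma step_eq: "apcg_step grad P p \<psi> a As Bs \<sigma> t i (x, v) = (xn t x v i, vn t x v i)"
  unfolding apcg_step_def Let_def xn_def vn_def vt_def yv_def wv_def al_def be_def eta_def
  by (simp add: vec_eq_iff axis_def)

lemma run_Suc: "run \<omega> (Suc t) = (xn t (fst (run \<omega> t)) (snd (run \<omega> t)) (\<omega> t), vn t (fst (run \<omega> t)) (snd (run \<omega> t)) (\<omega> t))"
  using step_eq[of t "\<omega> t" "fst (run \<omega> t)" "snd (run \<omega> t)"] by simp

lemma AB_basic: "As t \<ge> 0 \<and> Bs t > 0"
proof (induction t)
  case 0 then show ?case using A0 B0 by simp
next
  case (Suc t) then show ?case using As_rec[of t] Bs_rec[of t] a_pos[of t] sigma_nonneg
    by (simp add: add_nonneg_nonneg add_pos_nonneg)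
qed

lemma As_nonneg: "As t \<ge> 0" and Bs_pos: "Bs t > 0" using AB_basic by auto

lemma As_Suc_pos: "As (Suc t) > 0"
  using As_rec[of t] As_nonneg[of t] a_pos[of t] by simp

lemma al_pos: "al t > 0" unfolding al_def using a_pos As_Suc_pos by simp
lemma al_le1: "al t \<le> 1" unfolding al_def using As_rec[of t] As_nonneg[of t] As_Suc_pos[of t] by simp
lemma be_nonneg: "be t \<ge> 0" unfolding be_def using a_pos[of t] Bs_pos[of "Suc t"] sigma_nonneg by simp
lemma be_lt1: "be t < 1"
  unfolding be_def using Bs_rec[of t] Bs_pos[of t] Bs_pos[of "Suc t"] by simp

lemma albe: "al t * be t = \<sigma> / S^2"
proof -
  have "al t * be t = \<sigma> * (a (Suc t))^2 / (As (Suc t) * Bs (Suc t))"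
    unfolding al_def be_def by (simp add: power2_eq_square)
  also have "\<dots> = \<sigma> * (a (Suc t))^2 / ((a (Suc t))^2 * S^2)" by (simp add: a_eq)
  also have "\<dots> = \<sigma> / S^2" using a_pos[of t] by simp
  finally show ?thesis .
qed

lemma albe_lt1: "al t * be t < 1"
proof -
  have "al t * be t \<le> 1 * be t" using al_le1 be_nonneg by (intro mult_right_mono) auto
  then show ?thesis using be_lt1[of t] by simp
qed

lemma key_seq: "As (Suc t) * (al t)^2 * S^2 = Bs (Suc t)"
proof -
  have "As (Suc t) * (al t)^2 * S^2 = (a (Suc t))^2 * S^2 / As (Suc t)"
    unfolding al_def using As_Suc_pos[of t] by (simp add: power2_eq_square)
  also have "\<dots> = Bs (Suc t)" using As_Suc_pos[of t] by (simp add: a_eq)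
  finally show ?thesis .
qed

lemma Aal: "As (Suc t) * al t = a (Suc t)" unfolding al_def using As_Suc_pos[of t] by simp
lemma Aal1: "As (Suc t) * (1 - al t) = As t" using Aal[of t] As_rec[of t] by (simp add: algebra_simps)
lemma Bbe1: "Bs (Suc t) * (1 - be t) = Bs t"
proof -
  have "Bs (Suc t) * (1 - be t) = Bs (Suc t) - \<sigma> * a (Suc t)"
    unfolding be_def using Bs_pos[of "Suc t"] by (simp add: right_diff_distrib)
  then show ?thesis using Bs_rec[of t] by simp
qed

lemma al_rel: "(al t)^2 * (1 - al (Suc t)) = (al (Suc t))^2 * (1 - be (Suc t))"
proof -
  have k1: "(al t)^2 * S^2 = Bs (Suc t) / As (Suc t)" using key_seq[of t] As_Suc_pos[of t] by (simp add: field_simps)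
  have k2: "(al (Suc t))^2 * S^2 = Bs (Suc (Suc t)) / As (Suc (Suc t))"
    using key_seq[of "Suc t"] As_Suc_pos[of "Suc t"] by (simp add: field_simps)
  have "(al t)^2 * (1 - al (Suc t)) * S^2 = ((al t)^2 * S^2) * (1 - al (Suc t))" by (simp add: algebra_simps)
  also have "\<dots> = Bs (Suc t) / As (Suc t) * (1 - al (Suc t))" by (simp only: k1)
  also have "\<dots> = Bs (Suc t) / As (Suc (Suc t))"
  proof -
    have e: "As (Suc t) = As (Suc (Suc t)) * (1 - al (Suc t))" using Aal1[of "Suc t"] by simp
    have ne: "1 - al (Suc t) \<noteq> 0" using e As_Suc_pos[of t] by auto
    have "Bs (Suc t) / As (Suc t) * (1 - al (Suc t)) = Bs (Suc t) * (1 - al (Suc t)) / (As (Suc (Suc t)) * (1 - al (Suc t)))"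
      by (subst e) simp
    also have "\<dots> = Bs (Suc t) / As (Suc (Suc t))" using ne by simp
    finally show ?thesis .
  qed
  also have "\<dots> = Bs (Suc (Suc t)) * (1 - be (Suc t)) / As (Suc (Suc t))" using Bbe1[of "Suc t"] by simp
  also have "\<dots> = ((al (Suc t))^2 * S^2) * (1 - be (Suc t))" by (simp only: k2) simp
  also have "\<dots> = (al (Suc t))^2 * (1 - be (Suc t)) * S^2" by (simp add: algebra_simps)
  finally show ?thesis using S_pos by simp
qed

end


lemma smooth_alg:
  fixes B' A' a al p R M S d g c :: real
  assumes p: "p > 0" and Aal: "A' * al = a" and key: "A' * al^2 * S^2 = B'" and A': "A' > 0"
    and SR: "M * R / p^2 \<le> S^2" and R: "R \<ge> 0"
  shows "p * (2 * A' * ((al * R / p * d) * g + M / 2 * (al * R / p * d)^2))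
         \<le> 2 * a * R * d * g + B' * p * R * d^2"
proof -
  have e1: "p * (2 * A' * ((al * R / p * d) * g)) = 2 * a * R * d * g"
    using p Aal[symmetric] by (simp add: field_simps)
  have e2: "p * (2 * A' * (M / 2 * (al * R / p * d)^2)) = (A' * al^2) * (M * R / p^2) * (R * d^2 * p)"
    using p by (simp add: field_simps power2_eq_square)
  have "(A' * al^2) * (M * R / p^2) * (R * d^2 * p) \<le> (A' * al^2) * S^2 * (R * d^2 * p)"
    using SR R p A' by (intro mult_right_mono mult_left_mono) auto
  also have "\<dots> = B' * p * R * d^2" using key by (simp add: algebra_simps)
  finally show ?thesis using e1 e2 by (simp add: distrib_left)
qed

lemma prox_alg:
  fixes B' a p d g c w th Pth Pvt :: real
  assumes p: "p > 0" and a: "a > 0" and B': "B' > 0"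
    and tp: "Pvt + 1 / (2 * (a / (B' * p))) * ((w + d) - (w - (a / (B' * p)) * g))^2
               + 1 / (2 * (a / (B' * p))) * (th - (w + d))^2
             \<le> Pth + 1 / (2 * (a / (B' * p))) * (th - (w - (a / (B' * p)) * g))^2"
    and c: "c = w - th"
  shows "2 * a * d * g + B' * p * d^2 + B' * p * (2 * d * c + d^2) \<le> 2 * a * Pth - 2 * a * Pvt - 2 * a * g * c"
proof -
  let ?k = "1 / (2 * (a / (B' * p)))"
  have k: "?k = B' * p / (2 * a)" using a by simp
  have "2 * a * Pvt + 2 * a * ?k * (((w + d) - (w - (a / (B' * p)) * g))^2 + (th - (w + d))^2
          - (th - (w - (a / (B' * p)) * g))^2) \<le> 2 * a * Pth"
  proof -
    have gen: "2 * a * Pvt + 2 * a * K * (T1 + T2 - T3) \<le> 2 * a * Pth"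
      if h: "Pvt + K * T1 + K * T2 \<le> Pth + K * T3" for K T1 T2 T3 :: real
    proof -
      have "2 * a * (Pvt + K * T1 + K * T2) \<le> 2 * a * (Pth + K * T3)"
        using h a by (intro mult_left_mono) auto
      then show ?thesis by (simp add: algebra_simps)
    qed
    show ?thesis by (rule gen) (use tp in simp)
  qed
  moreover have "2 * a * ?k * (((w + d) - (w - (a / (B' * p)) * g))^2 + (th - (w + d))^2
          - (th - (w - (a / (B' * p)) * g))^2) = 2 * B' * p * d^2 + 2 * a * d * g + 2 * B' * p * c * d + 2 * a * g * c"
    unfolding k c using a p B' by (simp add: field_simps power2_eq_square)
  ultimately show ?thesis by (simp add: algebra_simps power2_eq_square)
qed

lemma zero_alg:
  fixes B' a p d g c R :: real
  assumes p: "p > 0" and a: "a > 0" and B': "B' > 0" and d: "d = - (a / (B' * p)) * g"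
  shows "2 * a * R * d * g + B' * p * R * d^2 + B' * p * (2 * d * c + d^2 * R) \<le> - 2 * a * g * c"
  unfolding d using a p B' by (simp add: field_simps power2_eq_square)



context apcg_ctx begin

lemma psi_nm: "\<psi> j s \<noteq> -\<infinity>" using psi_convex[of j] unfolding convex_ext_def by blast

lemma psi_theta_fin: "\<psi> j (\<theta> $ j) \<noteq> \<infinity>"
proof
  assume "\<psi> j (\<theta> $ j) = \<infinity>"
  then have "(\<Sum>i\<in>UNIV. \<psi> i (\<theta> $ i)) = \<infinity>" by (auto simp: sum_Pinfty)
  then have "F \<theta> = \<infinity>" unfolding F_def by simp
  with finite_min show False by simp
qed

lemma psr_eq: "\<psi> j s \<noteq> \<infinity> \<Longrightarrow> \<psi> j s = ereal (psr j s)"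
  unfolding psr_def using psi_nm[of j s] ereal_fin by blast

lemma eta_pos: "eta t i > 0" unfolding eta_def using a_pos[of t] Bs_pos[of "Suc t"] p_pos[of i] by simp

lemma vt_prox: "is_prox (eta t j) (\<psi> j) (wv t x v $ j - eta t j * grad (yv t x v) $ j) (vt t x v j)"
  unfolding vt_def by (rule prox_is_prox) (rule prox_exists[OF eta_pos])

lemma vt_fin: "\<psi> j (vt t x v j) \<noteq> \<infinity>"
  using prox_three_point(1)[OF psi_convex vt_prox eta_pos psi_theta_fin] .

definition Fs where "Fs = f \<theta> + (\<Sum>j\<in>UNIV. psr j (\<theta> $ j))"

lemma F_theta: "F \<theta> = ereal Fs"
  unfolding F_def Fs_def using psr_eq[OF psi_theta_fin] by simp

definition Wh where "Wh t X V j = ((1 - be t) * V j + be t * (1 - al t) * X j) / (1 - al t * be t)"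
definition Xn where "Xn t i x v X V j = (if j = i
   then (1 - al t) * X j + al t * (1 - 1 / p j) * Wh t X V j + (al t / p j) * psr j (vt t x v j)
   else (1 - al t) * X j + al t * Wh t X V j)"
definition Vn where "Vn t i x v X V j = (if j = i then psr j (vt t x v j) else Wh t X V j)"
definition mun where "mun t i mu j = (if j = i then al t / p j
   else al t + (1 - al t) * mu j * (1 - al t * be t) / ((1 - be t) + be t * (1 - al t) * mu j))"

definition Phi where "Phi t x v X = Bs t * sqnorm_P P (v - \<theta>) + 2 * As t * (f x + (\<Sum>j\<in>UNIV. X j) - Fs)"

lemma sum_if_p: "(\<Sum>i\<in>UNIV. p i * (if j = i then S1 else S2)) = S2 + p j * (S1 - S2)"
proof -
  have "(\<Sum>i\<in>UNIV. p i * (if j = i then S1 else S2)) = (\<Sum>i\<in>UNIV. p i * S2 + (if i = j then p i * (S1 - S2) else 0))"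
    by (intro sum.cong) (auto simp: algebra_simps)
  also have "\<dots> = S2 * (\<Sum>i\<in>UNIV. p i) + p j * (S1 - S2)"
    by (simp add: sum.distrib sum_distrib_right[symmetric])
  finally show ?thesis using p_sum by simp
qed

lemma expect_X:
  "(\<Sum>i\<in>UNIV. p i * (\<Sum>j\<in>UNIV. Xn t i x v X V j)) = (1 - al t) * (\<Sum>j\<in>UNIV. X j) + al t * (\<Sum>j\<in>UNIV. psr j (vt t x v j))"
proof -
  have "(\<Sum>i\<in>UNIV. p i * (\<Sum>j\<in>UNIV. Xn t i x v X V j)) = (\<Sum>j\<in>UNIV. \<Sum>i\<in>UNIV. p i * Xn t i x v X V j)"
    by (simp add: sum_distrib_left) (rule sum.swap)
  also have "\<dots> = (\<Sum>j\<in>UNIV. (1 - al t) * X j + al t * psr j (vt t x v j))"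
  proof (intro sum.cong refl)
    fix j
    have pj: "p j > 0" by (rule p_pos)
    have "(\<Sum>i\<in>UNIV. p i * Xn t i x v X V j) =
      ((1 - al t) * X j + al t * Wh t X V j) + p j * (((1 - al t) * X j + al t * (1 - 1 / p j) * Wh t X V j + (al t / p j) * psr j (vt t x v j)) - ((1 - al t) * X j + al t * Wh t X V j))"
      unfolding Xn_def by (rule sum_if_p)
    also have "\<dots> = (1 - al t) * X j + al t * psr j (vt t x v j)"
      using pj by (simp add: field_simps)
    finally show "(\<Sum>i\<in>UNIV. p i * Xn t i x v X V j) = (1 - al t) * X j + al t * psr j (vt t x v j)" .
  qed
  also have "\<dots> = (1 - al t) * (\<Sum>j\<in>UNIV. X j) + al t * (\<Sum>j\<in>UNIV. psr j (vt t x v j))"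
    by (simp add: sum.distrib sum_distrib_left)
  finally show ?thesis .
qed

end


context apcg_ctx begin

lemma vn_w: "vn t x v i - wv t x v = (vt t x v i - wv t x v $ i) *\<^sub>R axis i 1"
  unfolding vn_def by (simp add: vec_eq_iff axis_def)

lemma per_i:
  fixes t x v i
  defines "y \<equiv> yv t x v" and "w \<equiv> wv t x v"
  defines "g \<equiv> grad y" and "c \<equiv> P *v (w - \<theta>)" and "d \<equiv> vt t x v i - w $ i"
  shows "p i * (Bs (Suc t) * sqnorm_P P (vn t x v i - \<theta>) + 2 * As (Suc t) * f (xn t x v i))
    \<le> p i * (Bs (Suc t) * sqnorm_P P (w - \<theta>) + 2 * As (Suc t) * f y)
       + 2 * a (Suc t) * psr i (\<theta> $ i) - 2 * a (Suc t) * psr i (vt t x v i) - 2 * a (Suc t) * (g $ i * c $ i)"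
proof -
  let ?h = "al t * R i / p i * d"
  have pi: "p i > 0" by (rule p_pos)
  have Ri: "R i = P $ i $ i" by (simp add: R_def)
  have vnw: "vn t x v i - w = d *\<^sub>R axis i 1" unfolding w_def d_def by (rule vn_w)
  have xn_eq: "xn t x v i = y + ?h *\<^sub>R axis i 1"
    unfolding xn_def y_def[symmetric] w_def[symmetric] vnw Ri by simp
  have e: "vn t x v i - \<theta> = (w - \<theta>) + d *\<^sub>R axis i 1" using vnw by (simp add: algebra_simps)
  have sq: "sqnorm_P P (vn t x v i - \<theta>) = sqnorm_P P (w - \<theta>) + 2 * d * c $ i + d^2 * R i"
    unfolding c_def Ri e by (rule sq_add_axis)
  have fd: "f (xn t x v i) \<le> f y + ?h * g $ i + M i / 2 * ?h^2"
    unfolding xn_eq g_def by (rule descent[OF grad smooth])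
  have Rnn: "R i \<ge> 0" unfolding Ri by (rule diag_nonneg)
  have sm: "p i * (2 * As (Suc t) * (?h * g $ i + M i / 2 * ?h^2)) \<le> 2 * a (Suc t) * R i * d * g $ i + Bs (Suc t) * p i * R i * d^2"
    by (rule smooth_alg[OF pi Aal key_seq As_Suc_pos S_cond Rnn])
  have A1: "As (Suc t) > 0" by (rule As_Suc_pos)
  have main: "2 * a (Suc t) * R i * d * g $ i + Bs (Suc t) * p i * R i * d^2 + Bs (Suc t) * p i * (2 * d * c $ i + d^2 * R i)
     \<le> 2 * a (Suc t) * psr i (\<theta> $ i) - 2 * a (Suc t) * psr i (vt t x v i) - 2 * a (Suc t) * (g $ i * c $ i)"
  proof (cases "R i = 1")
    case True
    have ci: "c $ i = w $ i - \<theta> $ i" unfolding c_def using True Ri Pcomp by simp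
    have tp: "psr i (vt t x v i) + 1 / (2 * eta t i) * (vt t x v i - (w $ i - eta t i * g $ i))^2
       + 1 / (2 * eta t i) * (\<theta> $ i - vt t x v i)^2
       \<le> psr i (\<theta> $ i) + 1 / (2 * eta t i) * (\<theta> $ i - (w $ i - eta t i * g $ i))^2"
      unfolding psr_def g_def w_def y_def
      by (rule prox_three_point(2)[OF psi_convex vt_prox eta_pos psi_theta_fin])
    have vtd: "vt t x v i = w $ i + d" unfolding d_def by simp
    have "2 * a (Suc t) * d * g $ i + Bs (Suc t) * p i * d^2 + Bs (Suc t) * p i * (2 * d * c $ i + d^2)
       \<le> 2 * a (Suc t) * psr i (\<theta> $ i) - 2 * a (Suc t) * psr i (vt t x v i) - 2 * a (Suc t) * g $ i * c $ i"
      by (rule prox_alg[OF pi a_pos Bs_pos _ ci]) (use tp in \<open>simp add: vtd eta_def\<close>)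
    then show ?thesis using True by (simp add: algebra_simps)
  next
    case False
    then have z: "\<psi> i = (\<lambda>_. 0)" using R_or_zero by blast
    have vt0: "vt t x v i = w $ i - eta t i * g $ i"
      unfolding vt_def z w_def g_def y_def using prox_zero[OF eta_pos] by simp
    have dd: "d = - (a (Suc t) / (Bs (Suc t) * p i)) * g $ i" unfolding d_def vt0 eta_def by simp
    have ps0: "psr i s = 0" for s unfolding psr_def z by simp
    show ?thesis using zero_alg[OF pi a_pos Bs_pos dd, of "R i" "c $ i"] by (simp add: ps0 algebra_simps)
  qed
  have lhs: "p i * (Bs (Suc t) * sqnorm_P P (vn t x v i - \<theta>) + 2 * As (Suc t) * f (xn t x v i))
     \<le> p i * (Bs (Suc t) * sqnorm_P P (w - \<theta>) + 2 * As (Suc t) * f y)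
       + p i * (2 * As (Suc t) * (?h * g $ i + M i / 2 * ?h^2)) + Bs (Suc t) * p i * (2 * d * c $ i + d^2 * R i)"
  proof -
    have "p i * (2 * As (Suc t) * f (xn t x v i)) \<le> p i * (2 * As (Suc t) * (f y + ?h * g $ i + M i / 2 * ?h^2))"
      using fd pi A1 by (intro mult_left_mono) auto
    then show ?thesis unfolding sq by (simp add: algebra_simps)
  qed
  show ?thesis using lhs sm main by linarith
qed

end


context apcg_ctx begin

lemma sq_neg: "sqnorm_P P (- u) = sqnorm_P P u"
proof -
  have "P *v (- u) = - (P *v u)" by (simp add: vec_eq_iff matrix_vector_mult_def sum_negf)
  then show ?thesis unfolding sqnorm_P_def by simp
qed

lemma y_eq: "yv t x v = (1 - al t) *\<^sub>R x + al t *\<^sub>R wv t x v"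
proof -
  let ?y = "yv t x v"
  have ne: "1 - al t * be t \<noteq> 0" using albe_lt1[of t] by simp
  have H: "(1 - al t * be t) *\<^sub>R ?y = (1 - al t) *\<^sub>R x + (al t * (1 - be t)) *\<^sub>R v"
  proof -
    let ?z = "(1 - al t) *\<^sub>R x + (al t * (1 - be t)) *\<^sub>R v"
    have "(1 - al t * be t) *\<^sub>R ((1 / (1 - al t * be t)) *\<^sub>R ?z) = ((1 - al t * be t) * (1 / (1 - al t * be t))) *\<^sub>R ?z"
      by (simp only: scaleR_scaleR)
    also have "\<dots> = ?z" using ne by simp
    finally show ?thesis unfolding yv_def .
  qed
  have "(1 - al t) *\<^sub>R x + al t *\<^sub>R wv t x v = ((1 - al t) *\<^sub>R x + (al t * (1 - be t)) *\<^sub>R v) + (al t * be t) *\<^sub>R ?y"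
    unfolding wv_def by (simp add: scaleR_add_right)
  also have "\<dots> = (1 - al t * be t) *\<^sub>R ?y + (al t * be t) *\<^sub>R ?y" by (simp only: H)
  also have "\<dots> = ?y" by (simp add: scaleR_left_distrib[symmetric])
  finally show ?thesis by simp
qed

lemma one_step:
  "(\<Sum>i\<in>UNIV. p i * Phi (Suc t) (xn t x v i) (vn t x v i) (Xn t i x v X V)) \<le> Phi t x v X"
proof -
  define A0 where "A0 = As t"
  define A1 where "A1 = As (Suc t)"
  define B0 where "B0 = Bs t"
  define B1 where "B1 = Bs (Suc t)"
  define aa where "aa = a (Suc t)"
  define y where "y = yv t x v"
  define w where "w = wv t x v"
  define g where "g = grad y"
  define c where "c = P *v (w - \<theta>)"
  define L where "L u = g \<bullet> (P *v u)" for u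
  define sX where "sX = (\<Sum>j\<in>UNIV. X j)"
  define sT where "sT = (\<Sum>j\<in>UNIV. psr j (\<theta> $ j))"
  define sV where "sV = (\<Sum>j\<in>UNIV. psr j (vt t x v j))"
  have A1eq: "A1 = A0 + aa" unfolding A1_def A0_def aa_def by (rule As_rec)
  have A0nn: "A0 \<ge> 0" unfolding A0_def by (rule As_nonneg)
  have aapos: "aa > 0" unfolding aa_def by (rule a_pos)
  have A1al: "A1 * al t = aa" unfolding A1_def aa_def by (rule Aal)
  have A1al1: "A1 * (1 - al t) = A0" unfolding A1_def A0_def by (rule Aal1)
  let ?Q = "\<lambda>i. p i * (B1 * sqnorm_P P (vn t x v i - \<theta>) + 2 * A1 * f (xn t x v i))"
  have S1: "(\<Sum>i\<in>UNIV. p i * Phi (Suc t) (xn t x v i) (vn t x v i) (Xn t i x v X V))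
      = (\<Sum>i\<in>UNIV. ?Q i) + 2 * A1 * (\<Sum>i\<in>UNIV. p i * (\<Sum>j\<in>UNIV. Xn t i x v X V j)) - 2 * A1 * Fs"
  proof -
    have "(\<Sum>i\<in>UNIV. p i * Phi (Suc t) (xn t x v i) (vn t x v i) (Xn t i x v X V))
      = (\<Sum>i\<in>UNIV. ?Q i + 2 * A1 * (p i * (\<Sum>j\<in>UNIV. Xn t i x v X V j)) - 2 * A1 * Fs * p i)"
      unfolding Phi_def A1_def B1_def by (intro sum.cong refl) (simp add: algebra_simps)
    also have "\<dots> = (\<Sum>i\<in>UNIV. ?Q i) + 2 * A1 * (\<Sum>i\<in>UNIV. p i * (\<Sum>j\<in>UNIV. Xn t i x v X V j)) - 2 * A1 * Fs * (\<Sum>i\<in>UNIV. p i)"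
      by (simp add: sum.distrib sum_subtractf sum_distrib_left)
    finally show ?thesis using p_sum by simp
  qed
  have S2: "(\<Sum>i\<in>UNIV. ?Q i) \<le> (B1 * sqnorm_P P (w - \<theta>) + 2 * A1 * f y) + 2 * aa * sT - 2 * aa * sV - 2 * aa * (g \<bullet> c)"
  proof -
    have "(\<Sum>i\<in>UNIV. ?Q i) \<le> (\<Sum>i\<in>UNIV. p i * (B1 * sqnorm_P P (w - \<theta>) + 2 * A1 * f y)
         + 2 * aa * psr i (\<theta> $ i) - 2 * aa * psr i (vt t x v i) - 2 * aa * (g $ i * c $ i))"
      by (intro sum_mono) (unfold B1_def A1_def aa_def w_def y_def g_def c_def, rule per_i)
    also have "\<dots> = (B1 * sqnorm_P P (w - \<theta>) + 2 * A1 * f y) * (\<Sum>i\<in>UNIV. p i) + 2 * aa * sT - 2 * aa * sV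
        - 2 * aa * (\<Sum>i\<in>UNIV. g $ i * c $ i)"
      unfolding sT_def sV_def
      by (simp add: sum.distrib sum_subtractf sum_distrib_left[symmetric] sum_distrib_right[symmetric])
    also have "(\<Sum>i\<in>UNIV. g $ i * c $ i) = g \<bullet> c" by (simp add: inner_vec_def)
    finally show ?thesis using p_sum by simp
  qed
  have S3: "(\<Sum>i\<in>UNIV. p i * (\<Sum>j\<in>UNIV. Xn t i x v X V j)) = (1 - al t) * sX + al t * sV"
    unfolding sX_def sV_def by (rule expect_X)
  have S4a: "f x - f y \<ge> L (x - y)"
  proof -
    have "\<sigma> / 2 * ((x - y) \<bullet> (P *v (x - y))) \<ge> 0"
      using sq_nonneg[of "x - y"] sigma_nonneg unfolding sqnorm_P_def by simp
    then show ?thesis using strong[where x=x and y=y] unfolding L_def g_def by linarith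
  qed
  have S4b: "f \<theta> - f y \<ge> L (\<theta> - y) + \<sigma> / 2 * sqnorm_P P (y - \<theta>)"
    using strong[where x=\<theta> and y=y] sq_neg[of "y - \<theta>"] unfolding L_def g_def sqnorm_P_def by simp
  have S5: "B1 * sqnorm_P P (w - \<theta>) \<le> B0 * sqnorm_P P (v - \<theta>) + aa * \<sigma> * sqnorm_P P (y - \<theta>)"
  proof -
    have e: "w - \<theta> = (1 - be t) *\<^sub>R (v - \<theta>) + be t *\<^sub>R (y - \<theta>)"
      unfolding w_def wv_def y_def by (simp add: algebra_simps)
    have "sqnorm_P P (w - \<theta>) \<le> (1 - be t) * sqnorm_P P (v - \<theta>) + be t * sqnorm_P P (y - \<theta>)"
      unfolding e using be_nonneg[of t] be_lt1[of t] by (intro sq_conv) auto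
    then have "B1 * sqnorm_P P (w - \<theta>) \<le> B1 * ((1 - be t) * sqnorm_P P (v - \<theta>) + be t * sqnorm_P P (y - \<theta>))"
      using Bs_pos[of "Suc t"] unfolding B1_def by (intro mult_left_mono) auto
    also have "\<dots> = (B1 * (1 - be t)) * sqnorm_P P (v - \<theta>) + (B1 * be t) * sqnorm_P P (y - \<theta>)"
      by (simp add: algebra_simps)
    also have "B1 * (1 - be t) = B0" unfolding B1_def B0_def by (rule Bbe1)
    also have "B1 * be t = aa * \<sigma>" unfolding B1_def aa_def be_def using Bs_pos[of "Suc t"] by simp
    finally show ?thesis .
  qed
  have S6: "A0 * L (x - y) + aa * L (\<theta> - y) + aa * L (w - \<theta>) = 0"
  proof -
    have ye: "A1 *\<^sub>R y = A0 *\<^sub>R x + aa *\<^sub>R w"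
      unfolding y_def w_def y_eq scaleR_add_right scaleR_scaleR A1al A1al1 by simp
    have "A0 *\<^sub>R (x - y) + aa *\<^sub>R (\<theta> - y) + aa *\<^sub>R (w - \<theta>) = (A0 *\<^sub>R x + aa *\<^sub>R w) - (A0 + aa) *\<^sub>R y"
      by (simp add: algebra_simps)
    also have "\<dots> = 0" using ye A1eq by simp
    finally have z: "A0 *\<^sub>R (x - y) + aa *\<^sub>R (\<theta> - y) + aa *\<^sub>R (w - \<theta>) = 0" .
    have "L (A0 *\<^sub>R (x - y) + aa *\<^sub>R (\<theta> - y) + aa *\<^sub>R (w - \<theta>)) = A0 * L (x - y) + aa * L (\<theta> - y) + aa * L (w - \<theta>)"
      unfolding L_def by (simp add: matrix_vector_right_distrib matrix_vector_mult_scaleR inner_add_right)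
    then show ?thesis using z unfolding L_def by simp
  qed
  have gc: "g \<bullet> c = L (w - \<theta>)" unfolding L_def c_def ..
  have P4a: "A0 * (f x - f y) \<ge> A0 * L (x - y)" using S4a A0nn by (rule mult_left_mono)
  have P4b: "aa * (f \<theta> - f y) \<ge> aa * (L (\<theta> - y) + \<sigma> / 2 * sqnorm_P P (y - \<theta>))"
    using S4b aapos by (intro mult_left_mono) auto
  have Fs_eq: "Fs = f \<theta> + sT" unfolding Fs_def sT_def ..
  have PhiE: "Phi t x v X = B0 * sqnorm_P P (v - \<theta>) + 2 * A0 * (f x + sX - Fs)"
    unfolding Phi_def B0_def A0_def sX_def ..
  have "(\<Sum>i\<in>UNIV. p i * Phi (Suc t) (xn t x v i) (vn t x v i) (Xn t i x v X V))
     \<le> (B1 * sqnorm_P P (w - \<theta>) + 2 * A1 * f y) + 2 * aa * sT - 2 * aa * sV - 2 * aa * L (w - \<theta>)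
       + 2 * (A1 * (1 - al t)) * sX + 2 * (A1 * al t) * sV - 2 * A1 * Fs"
  proof -
    have "2 * A1 * ((1 - al t) * sX + al t * sV) = 2 * (A1 * (1 - al t)) * sX + 2 * (A1 * al t) * sV"
      by (simp add: algebra_simps)
    then show ?thesis unfolding S1 S3 using S2[unfolded gc] by linarith
  qed
  also have "\<dots> = (B1 * sqnorm_P P (w - \<theta>) + 2 * A1 * f y) + 2 * aa * sT - 2 * aa * L (w - \<theta>)
       + 2 * A0 * sX - 2 * A1 * Fs"
    unfolding A1al A1al1 by simp
  also have "\<dots> \<le> Phi t x v X"
  proof -
    let ?Sw = "sqnorm_P P (w - \<theta>)" and ?Sv = "sqnorm_P P (v - \<theta>)" and ?Sy = "sqnorm_P P (y - \<theta>)"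
    have E1: "(B1 * ?Sw + 2 * (A0 + aa) * f y) + 2 * aa * sT - 2 * aa * L (w - \<theta>) + 2 * A0 * sX - 2 * (A0 + aa) * (f \<theta> + sT)
      = B1 * ?Sw + 2 * (A0 * f y) + 2 * (aa * f y) - 2 * (aa * L (w - \<theta>)) + 2 * A0 * sX - 2 * (A0 * f \<theta>) - 2 * A0 * sT - 2 * (aa * f \<theta>)"
      by (simp add: algebra_simps)
    have E2: "B0 * ?Sv + 2 * A0 * (f x + sX - (f \<theta> + sT)) = B0 * ?Sv + 2 * (A0 * f x) + 2 * A0 * sX - 2 * (A0 * f \<theta>) - 2 * A0 * sT"
      by (simp add: algebra_simps)
    have Q1: "A0 * f x - A0 * f y \<ge> A0 * L (x - y)" using P4a by (simp add: algebra_simps)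
    have Q2: "aa * f \<theta> - aa * f y \<ge> aa * L (\<theta> - y) + (aa * \<sigma>) * ?Sy / 2" using P4b by (simp add: algebra_simps)
    have Q3: "aa * \<sigma> * ?Sy \<ge> 0" using aapos sigma_nonneg sq_nonneg[of "y - \<theta>"] by simp
    show ?thesis unfolding PhiE Fs_eq A1eq E1 E2 using S5 S6 Q1 Q2 Q3 by linarith
  qed
  finally show ?thesis .
qed

end


lemma affine_nonneg:
  fixes lo hi x c0 c1 :: real
  assumes "lo < hi" "lo \<le> x" "x \<le> hi" "c0 * lo + c1 \<ge> 0" "c0 * hi + c1 \<ge> 0"
  shows "c0 * x + c1 \<ge> 0"
proof -
  have "(hi - lo) * (c0 * x + c1) = (hi - x) * (c0 * lo + c1) + (x - lo) * (c0 * hi + c1)"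
    by (simp add: algebra_simps)
  moreover have "(hi - x) * (c0 * lo + c1) + (x - lo) * (c0 * hi + c1) \<ge> 0"
  proof -
    have "(hi - x) * (c0 * lo + c1) \<ge> 0" using assms by simp
    moreover have "(x - lo) * (c0 * hi + c1) \<ge> 0" using assms by simp
    ultimately show ?thesis by simp
  qed
  ultimately have "(hi - lo) * (c0 * x + c1) \<ge> 0" by simp
  then show ?thesis using assms(1) by (simp add: zero_le_mult_iff)
qed

lemma keyK:
  fixes al ga p q :: real
  assumes al0: "0 < al" and al1: "al < 1" and ga0: "0 < ga" and p0: "0 < p" and p1: "p \<le> 1"
    and q0: "0 \<le> q" and qp: "q \<le> p^2"
    and rel: "ga^2 * (1 - al) = al * (al - q)" and sc: "al^2 \<le> p * al - p * q"
  shows "al * (p - q) \<ge> (1 - p) * p * ga"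
proof (cases "p = 1")
  case True
  have "q \<le> 1" using qp True by simp
  then show ?thesis using True al0 by simp
next
  case False
  then have p1': "p < 1" using p1 by simp
  have qp1: "q < p"
  proof -
    have "p^2 < p" using p0 p1' by (simp add: power2_eq_square)
    then show ?thesis using qp by simp
  qed
  have alq: "al \<ge> q"
  proof -
    have "al * (al - q) \<ge> 0" using rel ga0 al1 by (metis mult_nonneg_nonneg zero_le_power2 diff_ge_0_iff_ge less_eq_real_def)
    then show ?thesis using al0 by (simp add: zero_le_mult_iff)
  qed
  have alp: "al \<le> p"
  proof -
    have "al^2 \<le> p * al" using sc p0 q0 by (smt (verit) mult_nonneg_nonneg)
    then show ?thesis using al0 by (simp add: power2_eq_square)
  qed
  define c0 where "c0 = (1 - p) * (p - q)^2 - (1 - p)^2 * p^2"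
  define c1 where "c1 = p * q * (p - q)^2 + (1 - p)^2 * p^2 * q"
  have Dlo: "c0 * q + c1 \<ge> 0"
  proof -
    have "c0 * q + c1 = q * (p - q)^2" unfolding c0_def c1_def by (simp add: algebra_simps power2_eq_square)
    then show ?thesis using q0 by simp
  qed
  have Dhi: "c0 * p + c1 \<ge> 0"
  proof -
    have e: "c0 * p + c1 = p * (p - q) * ((1 - p + q) * (p - q) - (1 - p)^2 * p)"
      unfolding c0_def c1_def by (simp add: algebra_simps power2_eq_square)
    have a1: "p - q \<ge> p * (1 - p)" using qp by (simp add: algebra_simps power2_eq_square)
    have a2: "1 - p + q \<ge> 1 - p" using q0 by simp
    have "(1 - p + q) * (p - q) \<ge> (1 - p) * (p * (1 - p))"
      using a1 a2 p1 p0 by (intro mult_mono) auto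
    then have "(1 - p + q) * (p - q) - (1 - p)^2 * p \<ge> 0" by (simp add: power2_eq_square algebra_simps)
    then show ?thesis unfolding e using p0 qp1 by simp
  qed
  have D: "c0 * al + c1 \<ge> 0"
  proof (cases "q = p")
    case True then show ?thesis using qp1 by simp
  next
    case False
    show ?thesis by (rule affine_nonneg[OF qp1 alq alp Dlo Dhi])
  qed
  have aa: "al * (1 - al) \<ge> (1 - p) * al + p * q" using sc by (simp add: algebra_simps power2_eq_square)
  have "al * (1 - al) * (p - q)^2 \<ge> ((1 - p) * al + p * q) * (p - q)^2"
    using aa by (intro mult_right_mono) auto
  moreover have "((1 - p) * al + p * q) * (p - q)^2 - (1 - p)^2 * p^2 * (al - q) = c0 * al + c1"
    unfolding c0_def c1_def by (simp add: algebra_simps power2_eq_square)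
  ultimately have M: "al * (1 - al) * (p - q)^2 \<ge> (1 - p)^2 * p^2 * (al - q)" using D by linarith
  have "(al * (p - q))^2 * (1 - al) = al * (al * (1 - al) * (p - q)^2)" by (simp add: algebra_simps power2_eq_square)
  also have "\<dots> \<ge> al * ((1 - p)^2 * p^2 * (al - q))" using M al0 by (intro mult_left_mono) auto
  also have "al * ((1 - p)^2 * p^2 * (al - q)) = ((1 - p) * p)^2 * (al * (al - q))"
    by (simp add: algebra_simps power2_eq_square)
  also have "\<dots> = ((1 - p) * p)^2 * (ga^2 * (1 - al))" by (simp only: rel)
  also have "\<dots> = ((1 - p) * p * ga)^2 * (1 - al)" by (simp add: algebra_simps power2_eq_square)
  finally have "((1 - p) * p * ga)^2 \<le> (al * (p - q))^2" using al1 by simp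
  moreover have "al * (p - q) \<ge> 0" using al0 qp1 by simp
  ultimately show ?thesis using power2_le_imp_le by blast
qed

lemma N0:
  fixes al be p :: real
  assumes "al \<le> p" "0 \<le> al * be" "al * be \<le> 1"
  shows "(1 - al) * (p - al * be) \<ge> al * (1 - p) * (1 - be)"
proof -
  have "(1 - al) * (p - al * be) - al * (1 - p) * (1 - be) = (p - al) * (1 - al * be)" by (simp add: algebra_simps)
  moreover have "(p - al) * (1 - al * be) \<ge> 0" using assms by simp
  ultimately show ?thesis by linarith
qed

lemma NS:
  fixes al be ga p :: real
  assumes K: "al * (p - al * be) \<ge> (1 - p) * p * ga" and rel: "ga^2 * (1 - al) = al * (al - al * be)"
    and ga0: "0 < ga" and p0: "0 < p" and be1: "be \<le> 1" and al0: "0 < al"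
  shows "(1 - al) * (ga / p) * (p - al * be) \<ge> al * (1 - p) * (1 - be)"
proof -
  have nn: "al - al * be \<ge> 0" using al0 be1 by (simp add: algebra_simps mult_left_le)
  have "((1 - al) * ga * (p - al * be)) * ga = (ga^2 * (1 - al)) * (p - al * be)"
    by (simp add: algebra_simps power2_eq_square)
  also have "\<dots> = (al * (al - al * be)) * (p - al * be)" by (simp only: rel)
  also have "\<dots> = (al - al * be) * (al * (p - al * be))" by (simp add: algebra_simps)
  also have "\<dots> \<ge> (al - al * be) * ((1 - p) * p * ga)" using K nn by (intro mult_left_mono) auto
  finally have h: "((1 - al) * ga * (p - al * be)) * ga \<ge> (al - al * be) * ((1 - p) * p * ga)" .
  have "(al - al * be) * ((1 - p) * p * ga) = ((al - al * be) * (1 - p) * p) * ga" by (simp only: ac_simps)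
  with h have "((1 - al) * ga * (p - al * be)) * ga \<ge> ((al - al * be) * (1 - p) * p) * ga" by simp
  then have h2: "(1 - al) * ga * (p - al * be) \<ge> (al - al * be) * (1 - p) * p" using ga0 by (rule mult_right_le_imp_le)
  have m1: "((1 - al) * (ga / p) * (p - al * be)) * p = (1 - al) * ga * (p - al * be)" using p0 by simp
  have m2: "(al * (1 - p) * (1 - be)) * p = (al - al * be) * (1 - p) * p" by (simp add: algebra_simps)
  have "((1 - al) * (ga / p) * (p - al * be)) * p \<ge> (al * (1 - p) * (1 - be)) * p" unfolding m1 m2 by (rule h2)
  then show ?thesis using p0 by (rule mult_right_le_imp_le)
qed

lemma unsampled_mu:
  fixes al be p mu :: real
  defines "k \<equiv> (1 - be) + be * (1 - al) * mu"
  assumes N: "(1 - al) * mu * (p - al * be) \<ge> al * (1 - p) * (1 - be)"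
    and be0: "0 \<le> be" and be1: "be < 1" and al0: "0 < al" and al1: "al \<le> 1" and mu0: "0 \<le> mu" and mu1: "mu \<le> 1"
    and p0: "0 < p"
  shows "k > 0" and "al / p \<le> al + (1 - al) * mu * (1 - al * be) / k"
    and "al + (1 - al) * mu * (1 - al * be) / k \<le> 1"
proof -
  show k0: "k > 0" unfolding k_def using be0 be1 al1 mu0 by (smt (verit) mult_nonneg_nonneg)
  define T where "T = (1 - al) * mu * (1 - al * be)"
  have d1: "T / k * (p * k) = T * p" using k0 by simp
  have d2: "al / p * (p * k) = al * k" using p0 by simp
  have "(al + T / k - al / p) * (p * k) = al * (p * k) + T / k * (p * k) - al / p * (p * k)"
    by (simp only: distrib_right left_diff_distrib)
  also have "\<dots> = al * (p * k) + T * p - al * k" by (simp only: d1 d2)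
  also have "\<dots> = al * (p - 1) * (1 - be) + (1 - al) * mu * (p - al * be)"
    unfolding k_def T_def by (simp add: algebra_simps)
  also have "\<dots> \<ge> 0" using N by (simp add: algebra_simps)
  finally have "(al + T / k - al / p) * (p * k) \<ge> 0" .
  then show "al / p \<le> al + (1 - al) * mu * (1 - al * be) / k"
    using k0 p0 mult_pos_pos[OF p0 k0] unfolding T_def[symmetric] by (auto simp: zero_le_mult_iff)
  have "(1 - (al + T / k)) * k = k - al * k - T / k * k" by (simp add: algebra_simps)
  also have "\<dots> = k - al * k - T" using k0 by simp
  also have "\<dots> = (1 - al) * (1 - be) * (1 - mu)" unfolding k_def T_def by (simp add: algebra_simps)
  also have "\<dots> \<ge> 0" using al1 be1 mu1 by simp
  finally show "al + (1 - al) * mu * (1 - al * be) / k \<le> 1" using k0 unfolding T_def[symmetric] by (simp add: zero_le_mult_iff)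
qed



lemma conv2:
  assumes conv: "convex_ext \<phi>" and c: "0 \<le> c" "c \<le> 1" and ha: "\<phi> a \<le> ereal A" and hb: "\<phi> b \<le> ereal B"
  shows "\<phi> (c * a + (1 - c) * b) \<le> ereal (c * A + (1 - c) * B)"
proof -
  have "\<phi> (c * a + (1 - c) * b) \<le> ereal c * \<phi> a + ereal (1 - c) * \<phi> b"
    using conv c unfolding convex_ext_def by blast
  also have "\<dots> \<le> ereal c * ereal A + ereal (1 - c) * ereal B"
    using c ha hb by (intro add_mono ereal_mult_left_mono) auto
  also have "\<dots> = ereal (c * A + (1 - c) * B)" by simp
  finally show ?thesis .
qed

lemma trans_unsampled_real:
  fixes al be p mu xj vj u wj X V U W :: real
  defines "q \<equiv> al * be"
  defines "k \<equiv> (1 - be) + be * (1 - al) * mu"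
  assumes conv: "convex_ext \<phi>"
    and al0: "0 < al" and al1: "al \<le> 1" and be0: "0 \<le> be" and be1: "be < 1"
    and mu0: "0 \<le> mu" and mu1: "mu \<le> 1"
    and rx: "xj = mu * vj + (1 - mu) * u" and hu: "\<phi> u \<le> ereal U" and hv: "\<phi> vj \<le> ereal V"
    and rX: "X = mu * V + (1 - mu) * U"
    and w: "(1 - q) * wj = (1 - be) * vj + be * (1 - al) * xj"
    and W: "W = ((1 - be) * V + be * (1 - al) * X) / (1 - q)"
  shows "\<phi> wj \<le> ereal W"
    and "(1 - al) * xj + al * wj = (al + (1 - al) * mu * (1 - q) / k) * wj + (1 - (al + (1 - al) * mu * (1 - q) / k)) * u"
    and "(1 - al) * X + al * W = (al + (1 - al) * mu * (1 - q) / k) * W + (1 - (al + (1 - al) * mu * (1 - q) / k)) * U"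
proof -
  have q1: "q < 1"
  proof -
    have "al * be \<le> 1 * be" using al1 be0 by (intro mult_right_mono) auto
    then show ?thesis unfolding q_def using be1 by simp
  qed
  have k0: "k > 0"
  proof -
    have "be * (1 - al) * mu \<ge> 0" using be0 al1 mu0 by simp
    then show ?thesis unfolding k_def using be1 by simp
  qed
  define c where "c = k / (1 - q)"
  have kq: "1 - q - k = be * (1 - al) * (1 - mu)" unfolding q_def k_def by (simp add: algebra_simps)
  have kq0: "be * (1 - al) * (1 - mu) \<ge> 0" using be0 al1 mu1 by simp
  have c0: "0 \<le> c" "c \<le> 1"
  proof -
    show "0 \<le> c" unfolding c_def using k0 q1 by simp
    have "k \<le> 1 - q" using kq kq0 by linarith
    then show "c \<le> 1" unfolding c_def using q1 by simp
  qed
  have qc: "(1 - q) * c = k" unfolding c_def using q1 by simp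
  have lin: "(1 - q) * (c * a1 + (1 - c) * b1) = k * a1 + be * (1 - al) * (1 - mu) * b1" for a1 b1
  proof -
    have "(1 - q) * (c * a1 + (1 - c) * b1) = ((1 - q) * c) * a1 + ((1 - q) - (1 - q) * c) * b1"
      by (simp add: algebra_simps)
    then show ?thesis unfolding qc kq[symmetric] by simp
  qed
  have wc: "wj = c * vj + (1 - c) * u"
  proof -
    have "(1 - q) * wj = k * vj + be * (1 - al) * (1 - mu) * u" unfolding w rx k_def by (simp add: algebra_simps)
    then have "(1 - q) * wj = (1 - q) * (c * vj + (1 - c) * u)" unfolding lin .
    then show ?thesis using q1 by simp
  qed
  have Wc: "W = c * V + (1 - c) * U"
  proof -
    have "(1 - q) * W = (1 - be) * V + be * (1 - al) * X" unfolding W using q1 by simp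
    also have "\<dots> = k * V + be * (1 - al) * (1 - mu) * U" unfolding rX k_def by (simp add: algebra_simps)
    finally have "(1 - q) * W = k * V + be * (1 - al) * (1 - mu) * U" .
    then have "(1 - q) * W = (1 - q) * (c * V + (1 - c) * U)" unfolding lin .
    then show ?thesis using q1 by simp
  qed
  show "\<phi> wj \<le> ereal W" unfolding wc Wc by (rule conv2[OF conv c0 hv hu])
  have mc: "(al + (1 - al) * mu * (1 - q) / k) * c = al * c + (1 - al) * mu"
    unfolding c_def using k0 q1 by (simp add: field_simps)
  have gen: "(1 - al) * (mu * a1 + (1 - mu) * b1) + al * (c * a1 + (1 - c) * b1) = m * (c * a1 + (1 - c) * b1) + (1 - m) * b1"
    if h: "m * c = al * c + (1 - al) * mu" for m a1 b1
  proof -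
    have "m * (c * a1 + (1 - c) * b1) + (1 - m) * b1 = (m * c) * a1 + (1 - m * c) * b1" by (simp add: algebra_simps)
    also have "\<dots> = (al * c + (1 - al) * mu) * a1 + (1 - (al * c + (1 - al) * mu)) * b1" unfolding h ..
    finally show ?thesis by (simp add: algebra_simps)
  qed
  show "(1 - al) * xj + al * wj = (al + (1 - al) * mu * (1 - q) / k) * wj + (1 - (al + (1 - al) * mu * (1 - q) / k)) * u"
    unfolding wc rx by (rule gen[OF mc])
  show "(1 - al) * X + al * W = (al + (1 - al) * mu * (1 - q) / k) * W + (1 - (al + (1 - al) * mu * (1 - q) / k)) * U"
    unfolding Wc rX by (rule gen[OF mc])
qed

lemma trans_sampled_real:
  fixes al be p mu xj vj u wj X V U W vtj Pvt :: real
  defines "q \<equiv> al * be"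
  defines "k \<equiv> (1 - be) + be * (1 - al) * mu"
  assumes conv: "convex_ext \<phi>"
    and al0: "0 < al" and al1: "al \<le> 1" and be0: "0 \<le> be" and be1: "be < 1"
    and mu0: "0 \<le> mu" and mu1: "mu \<le> 1" and p0: "0 < p" and alp: "al \<le> p" and qp: "q \<le> p"
    and N: "(1 - al) * mu * (p - q) \<ge> al * (1 - p) * (1 - be)"
    and rx: "xj = mu * vj + (1 - mu) * u" and hu: "\<phi> u \<le> ereal U" and hv: "\<phi> vj \<le> ereal V"
    and rX: "X = mu * V + (1 - mu) * U"
    and w: "(1 - q) * wj = (1 - be) * vj + be * (1 - al) * xj"
    and W: "W = ((1 - be) * V + be * (1 - al) * X) / (1 - q)"
    and hvt: "\<phi> vtj \<le> ereal Pvt"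
  shows "\<exists>u' U'. (1 - al) * xj + al * (1 - 1 / p) * wj + (al / p) * vtj = (al / p) * vtj + (1 - al / p) * u'
      \<and> \<phi> u' \<le> ereal U' \<and> (1 - al) * X + al * (1 - 1 / p) * W + (al / p) * Pvt = (al / p) * Pvt + (1 - al / p) * U'"
proof -
  have q1: "q < 1"
  proof -
    have "al * be \<le> 1 * be" using al1 be0 by (intro mult_right_mono) auto
    then show ?thesis unfolding q_def using be1 by simp
  qed
  have k0: "k > 0"
  proof -
    have "be * (1 - al) * mu \<ge> 0" using be0 al1 mu0 by simp
    then show ?thesis unfolding k_def using be1 by simp
  qed
  define c where "c = k / (1 - q)"
  have kq: "1 - q - k = be * (1 - al) * (1 - mu)" unfolding q_def k_def by (simp add: algebra_simps)
  have qc: "(1 - q) * c = k" unfolding c_def using q1 by simp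
  have lin: "(1 - q) * (c * a1 + (1 - c) * b1) = k * a1 + be * (1 - al) * (1 - mu) * b1" for a1 b1
  proof -
    have "(1 - q) * (c * a1 + (1 - c) * b1) = ((1 - q) * c) * a1 + ((1 - q) - (1 - q) * c) * b1"
      by (simp add: algebra_simps)
    then show ?thesis unfolding qc kq[symmetric] by simp
  qed
  have wc: "wj = c * vj + (1 - c) * u"
  proof -
    have "(1 - q) * wj = k * vj + be * (1 - al) * (1 - mu) * u" unfolding w rx k_def by (simp add: algebra_simps)
    then have "(1 - q) * wj = (1 - q) * (c * vj + (1 - c) * u)" unfolding lin .
    then show ?thesis using q1 by simp
  qed
  have Wc: "W = c * V + (1 - c) * U"
  proof -
    have "(1 - q) * W = (1 - be) * V + be * (1 - al) * X" unfolding W using q1 by simp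
    also have "\<dots> = k * V + be * (1 - al) * (1 - mu) * U" unfolding rX k_def by (simp add: algebra_simps)
    finally have "(1 - q) * W = k * V + be * (1 - al) * (1 - mu) * U" .
    then have "(1 - q) * W = (1 - q) * (c * V + (1 - c) * U)" unfolding lin .
    then show ?thesis using q1 by simp
  qed
  define ev where "ev = (1 - al) * mu + al * (1 - 1 / p) * c"
  define eu where "eu = (1 - al) * (1 - mu) + al * (1 - 1 / p) * (1 - c)"
  have rep: "(1 - al) * (mu * a1 + (1 - mu) * b1) + al * (1 - 1 / p) * (c * a1 + (1 - c) * b1) = ev * a1 + eu * b1" for a1 b1
    unfolding ev_def eu_def using p0 by (simp add: field_simps)
  have sum_e: "ev + eu = 1 - al / p" unfolding ev_def eu_def using p0 by (simp add: field_simps)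
  have pp: "p * (1 - 1 / p) = p - 1" using p0 by (simp add: algebra_simps)
  have ev0: "ev \<ge> 0"
  proof -
    have "p * (1 - q) * ev = p * (1 - q) * (1 - al) * mu + al * (p * (1 - 1 / p)) * ((1 - q) * c)"
      unfolding ev_def using p0 by (simp add: field_simps)
    also have "\<dots> = (1 - al) * mu * (p - q) - al * (1 - p) * (1 - be)"
      unfolding pp qc unfolding k_def q_def by (simp add: algebra_simps)
    also have "\<dots> \<ge> 0" using N by simp
    finally have "p * (1 - q) * ev \<ge> 0" .
    moreover have "p * (1 - q) > 0" using p0 q1 by simp
    ultimately show ?thesis by (simp add: zero_le_mult_iff)
  qed
  have eu0: "eu \<ge> 0"
  proof -
    have "p * (1 - q) * eu = p * (1 - q) * (1 - al) * (1 - mu) + al * (p * (1 - 1 / p)) * ((1 - q) - (1 - q) * c)"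
      unfolding eu_def using p0 by (simp add: field_simps)
    also have "\<dots> = (1 - al) * (1 - mu) * (p - q)"
      unfolding pp qc kq unfolding q_def by (simp add: algebra_simps)
    also have "\<dots> \<ge> 0" using al1 mu1 qp by simp
    finally have "p * (1 - q) * eu \<ge> 0" .
    moreover have "p * (1 - q) > 0" using p0 q1 by simp
    ultimately show ?thesis by (simp add: zero_le_mult_iff)
  qed
  have lx: "(1 - al) * xj + al * (1 - 1 / p) * wj = ev * vj + eu * u" unfolding rx wc by (rule rep)
  have lX: "(1 - al) * X + al * (1 - 1 / p) * W = ev * V + eu * U" unfolding rX Wc by (rule rep)
  show ?thesis
  proof (cases "al < p")
    case True
    define s where "s = 1 - al / p"
    have s0: "s > 0" unfolding s_def using True p0 by simp
    define c' where "c' = ev / s"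
    have c'0: "0 \<le> c'" "c' \<le> 1" unfolding c'_def using ev0 eu0 s0 sum_e by (auto simp: s_def)
    have sc1: "s * c' = ev" unfolding c'_def using s0 by simp
    have se: "ev + eu = s" using sum_e unfolding s_def .
    have sc2: "s * (1 - c') = eu" using sc1 se by (simp add: right_diff_distrib)
    note sc = sc1 sc2
    show ?thesis
    proof (intro exI conjI)
      show "\<phi> (c' * vj + (1 - c') * u) \<le> ereal (c' * V + (1 - c') * U)" by (rule conv2[OF conv c'0 hv hu])
      have "(1 - al / p) * (c' * vj + (1 - c') * u) = (s * c') * vj + (s * (1 - c')) * u"
        unfolding s_def[symmetric] by (simp add: algebra_simps)
      then show "(1 - al) * xj + al * (1 - 1 / p) * wj + al / p * vtj = al / p * vtj + (1 - al / p) * (c' * vj + (1 - c') * u)"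
        using lx sc by simp
      have "(1 - al / p) * (c' * V + (1 - c') * U) = (s * c') * V + (s * (1 - c')) * U"
        unfolding s_def[symmetric] by (simp add: algebra_simps)
      then show "(1 - al) * X + al * (1 - 1 / p) * W + al / p * Pvt = al / p * Pvt + (1 - al / p) * (c' * V + (1 - c') * U)"
        using lX sc by simp
    qed
  next
    case False
    then have alp': "al = p" using alp by simp
    then have "ev + eu = 0" using sum_e p0 by simp
    then have z: "ev = 0" "eu = 0" using ev0 eu0 by auto
    show ?thesis
    proof (intro exI conjI)
      show "\<phi> vtj \<le> ereal Pvt" by (rule hvt)
      show "(1 - al) * xj + al * (1 - 1 / p) * wj + al / p * vtj = al / p * vtj + (1 - al / p) * vtj"
        using lx z alp' p0 by simp
      show "(1 - al) * X + al * (1 - 1 / p) * W + al / p * Pvt = al / p * Pvt + (1 - al / p) * Pvt"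
        using lX z alp' p0 by simp
    qed
  qed
qed



context apcg_ctx begin

primrec hrun :: "(nat \<Rightarrow> 'd) \<Rightarrow> nat \<Rightarrow> ('d \<Rightarrow> real) \<times> ('d \<Rightarrow> real) \<times> ('d \<Rightarrow> real)" where
  "hrun \<omega> 0 = ((\<lambda>_. 1), (\<lambda>j. psr j 0), (\<lambda>j. psr j 0))"
| "hrun \<omega> (Suc t) = (mun t (\<omega> t) (fst (hrun \<omega> t)),
      Xn t (\<omega> t) (fst (run \<omega> t)) (snd (run \<omega> t)) (fst (snd (hrun \<omega> t))) (snd (snd (hrun \<omega> t))),
      Vn t (\<omega> t) (fst (run \<omega> t)) (snd (run \<omega> t)) (fst (snd (hrun \<omega> t))) (snd (snd (hrun \<omega> t))))"

lemma p_le1: "p j \<le> 1"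
proof -
  have "p j \<le> (\<Sum>i\<in>UNIV. p i)" by (rule member_le_sum) (auto simp: less_imp_le[OF p_pos])
  then show ?thesis using p_sum by simp
qed

lemma p_lt1: assumes "i \<noteq> j" shows "p j < 1"
proof -
  have "p i + p j = (\<Sum>k\<in>{i, j}. p k)" using assms by simp
  also have "\<dots> \<le> (\<Sum>k\<in>UNIV. p k)" by (rule sum_mono2) (auto simp: less_imp_le[OF p_pos])
  finally show ?thesis using p_sum p_pos[of i] by simp
qed

lemma sigma_le_M: assumes Rj: "R j = 1" shows "\<sigma> \<le> M j"
proof -
  let ?e = "axis j (1::real) :: real^'d"
  have Pjj: "P $ j $ j = 1" using Rj by (simp add: R_def)
  have Pe: "P *v ?e = ?e" by (rule Pe[OF Pjj])
  have s: "f ?e - f 0 \<ge> grad 0 \<bullet> (P *v ?e) + \<sigma> / 2 * (?e \<bullet> (P *v ?e))"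
    using strong[where x = "?e" and y = 0] by simp
  have d: "f (0 + 1 *\<^sub>R ?e) \<le> f 0 + 1 * grad 0 $ j + M j / 2 * 1^2"
    by (rule descent[OF grad smooth])
  have "grad 0 \<bullet> ?e = grad 0 $ j" by (simp add: inner_axis)
  moreover have "?e \<bullet> ?e = 1" by (simp add: inner_axis_axis)
  ultimately show ?thesis using s d Pe by simp
qed

lemma q_le_p2: assumes Rj: "R j = 1" shows "\<sigma> / S^2 \<le> (p j)^2"
proof -
  have "M j / (p j)^2 \<le> S^2" using S_cond[of j] Rj by simp
  then have "M j \<le> S^2 * (p j)^2" using p_pos[of j] by (simp add: field_simps)
  then have "\<sigma> \<le> S^2 * (p j)^2" using sigma_le_M[OF Rj] by simp
  then show ?thesis using S_pos by (simp add: field_simps)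
qed

lemma step_j: assumes Rj: "R j = 1" shows "al t \<le> p j * (1 - be t)"
proof -
  have "1 - be t - al t / p j \<ge> 0" using step_cond[where i=j and t=t] Rj unfolding al_def be_def by simp
  then have "al t / p j \<le> 1 - be t" by simp
  then show ?thesis using p_pos[of j] by (simp add: field_simps)
qed

lemma al_le_p: assumes Rj: "R j = 1" shows "al t \<le> p j"
proof -
  have "p j * (1 - be t) \<le> p j * 1" using be_nonneg[of t] p_pos[of j] by (intro mult_left_mono) auto
  then show ?thesis using step_j[OF Rj, of t] by simp
qed

lemma al_lt1: assumes "As t > 0" shows "al t < 1"
  unfolding al_def using assms As_rec[of t] a_pos[of t] by simp

lemma al_eq1: assumes "\<not> As t > 0" shows "al t = 1"
proof -
  have "As t = 0" using assms As_nonneg[of t] by simp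
  then show ?thesis unfolding al_def using As_rec[of t] a_pos[of t] by simp
qed

definition mlow where "mlow t j = (case t of 0 \<Rightarrow> 1 | Suc s \<Rightarrow> al s / p j)"

lemma N_holds:
  assumes Rj: "R j = 1" and mu: "mlow t j \<le> mu"
  shows "(1 - al t) * mu * (p j - al t * be t) \<ge> al t * (1 - p j) * (1 - be t)"
proof -
  have q: "al t * be t = \<sigma> / S^2" by (rule albe)
  have qp2: "al t * be t \<le> (p j)^2" using q q_le_p2[OF Rj] by simp
  have qp: "al t * be t \<le> p j"
  proof -
    have "(p j)^2 \<le> p j" using p_le1[of j] p_pos[of j] by (simp add: power2_eq_square mult_left_le)
    then show ?thesis using qp2 by simp
  qed
  have mono: "(1 - al t) * mu * (p j - al t * be t) \<ge> (1 - al t) * m * (p j - al t * be t)" if "m \<le> mu" for m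
  proof -
    have "(1 - al t) * (p j - al t * be t) \<ge> 0" using al_le1[of t] qp by simp
    then have "m * ((1 - al t) * (p j - al t * be t)) \<le> mu * ((1 - al t) * (p j - al t * be t))"
      by (rule mult_right_mono[OF that])
    then show ?thesis by (simp add: algebra_simps)
  qed
  have base: "(1 - al t) * mlow t j * (p j - al t * be t) \<ge> al t * (1 - p j) * (1 - be t)"
  proof (cases t)
    case 0
    have "al t * be t \<ge> 0" using al_pos[of t] be_nonneg[of t] by simp
    moreover have "al t * be t \<le> 1" using albe_lt1[of t] by simp
    ultimately show ?thesis using N0[OF al_le_p[OF Rj] _ _] by (simp add: mlow_def 0)
  next
    case (Suc s)
    let ?al = "al t" and ?ga = "al s" and ?q = "al t * be t"
    have relt: "?ga^2 * (1 - ?al) = ?al * (?al - ?q)"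
      using al_rel[of s] unfolding Suc by (simp add: algebra_simps power2_eq_square)
    have At: "As t > 0" unfolding Suc by (rule As_Suc_pos)
    have sc: "?al^2 \<le> p j * ?al - p j * ?q"
    proof -
      have "?al * ?al \<le> p j * (1 - be t) * ?al" using step_j[OF Rj, of t] al_pos[of t] by (intro mult_right_mono) auto
      then show ?thesis by (simp add: power2_eq_square algebra_simps)
    qed
    have K: "?al * (p j - ?q) \<ge> (1 - p j) * p j * ?ga"
      by (rule keyK[OF al_pos al_lt1[OF At] al_pos p_pos p_le1 _ qp2 relt sc])
        (use al_pos[of t] be_nonneg[of t] in simp)
    have "(1 - ?al) * (?ga / p j) * (p j - ?al * be t) \<ge> ?al * (1 - p j) * (1 - be t)"
      by (rule NS[OF K _ al_pos p_pos _ al_pos]) (use relt be_lt1[of t] in \<open>simp_all add: algebra_simps\<close>)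
    then show ?thesis by (simp add: mlow_def Suc)
  qed
  show ?thesis using mono[OF mu] base by linarith
qed

end


context apcg_ctx begin

lemma w_rel: "(1 - al t * be t) * wv t x v $ j = (1 - be t) * v $ j + be t * (1 - al t) * x $ j"
proof -
  have e1: "wv t x v $ j = (1 - be t) * v $ j + be t * (yv t x v $ j)" by (simp add: wv_def)
  have e2: "yv t x v $ j = (1 - al t) * x $ j + al t * (wv t x v $ j)" by (subst y_eq) simp
  from e1 e2 show ?thesis by (simp add: algebra_simps)
qed

lemma yv_comp: "yv t x v $ j = (1 - al t) * x $ j + al t * (wv t x v $ j)" by (subst y_eq) simp

lemma vn_comp: "vn t x v i $ j = (if j = i then vt t x v i else wv t x v $ j)"
  unfolding vn_def by simp

lemma xn_comp: "xn t x v i $ j = yv t x v $ j + (if j = i then al t * R i / p i * (vt t x v i - wv t x v $ i) else 0)"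
  unfolding xn_def vn_w by (simp add: R_def axis_def)

definition Inv where "Inv t j x v mu X V \<longleftrightarrow> mlow t j \<le> mu j \<and> mu j \<le> 1 \<and>
   (As t > 0 \<longrightarrow> (\<psi> j (v $ j) \<le> ereal (V j) \<and>
      (\<exists>u U. x $ j = mu j * v $ j + (1 - mu j) * u \<and> \<psi> j u \<le> ereal U \<and> X j = mu j * V j + (1 - mu j) * U)))"

lemma psr_le: "\<psi> j s \<noteq> \<infinity> \<Longrightarrow> \<psi> j s \<le> ereal (psr j s)" using psr_eq by simp

lemma mlow_pos: "mlow t j > 0"
  by (cases t) (auto simp: mlow_def al_pos p_pos)

lemma Inv_step:
  assumes Rj: "R j = 1" and I: "Inv t j x v mu X V"
  shows "Inv (Suc t) j (xn t x v i) (vn t x v i) (mun t i mu) (Xn t i x v X V) (Vn t i x v X V)"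
proof -
  let ?al = "al t" and ?be = "be t" and ?p = "p j" and ?mu = "mu j"
  have mu_lo: "mlow t j \<le> ?mu" and mu1: "?mu \<le> 1" using I unfolding Inv_def by auto
  have mu0: "0 \<le> ?mu" using mu_lo mlow_pos[of t j] by simp
  have N: "(1 - ?al) * ?mu * (?p - ?al * ?be) \<ge> ?al * (1 - ?p) * (1 - ?be)" by (rule N_holds[OF Rj mu_lo])
  have qp: "?al * ?be \<le> ?p"
  proof -
    have "?al * ?be \<le> (p j)^2" using albe[of t] q_le_p2[OF Rj] by simp
    also have "(p j)^2 \<le> p j" using p_le1[of j] p_pos[of j] by (simp add: power2_eq_square mult_left_le)
    finally show ?thesis .
  qed
  have wr: "(1 - ?al * ?be) * wv t x v $ j = (1 - ?be) * v $ j + ?be * (1 - ?al) * x $ j" by (rule w_rel)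
  have Wd: "Wh t X V j = ((1 - ?be) * V j + ?be * (1 - ?al) * X j) / (1 - ?al * ?be)" by (simp add: Wh_def)
  have AS: "As (Suc t) > 0" by (rule As_Suc_pos)
  show ?thesis
  proof (cases "j = i")
    case True
    have mun: "mun t i mu j = ?al / ?p" using True by (simp add: mun_def)
    have vnj: "vn t x v i $ j = vt t x v j" using True by (simp add: vn_comp)
    have Vnj: "Vn t i x v X V j = psr j (vt t x v j)" using True by (simp add: Vn_def)
    have xnj: "xn t x v i $ j = (1 - ?al) * x $ j + ?al * (1 - 1 / ?p) * wv t x v $ j + (?al / ?p) * vt t x v j"
      using True Rj p_pos[of j] by (simp add: xn_comp yv_comp field_simps)
    have Xnj: "Xn t i x v X V j = (1 - ?al) * X j + ?al * (1 - 1 / ?p) * Wh t X V j + (?al / ?p) * psr j (vt t x v j)"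
      using True by (simp add: Xn_def)
    have hvt: "\<psi> j (vt t x v j) \<le> ereal (psr j (vt t x v j))" by (rule psr_le[OF vt_fin])
    have ex: "\<exists>u' U'. xn t x v i $ j = (?al / ?p) * vt t x v j + (1 - ?al / ?p) * u' \<and> \<psi> j u' \<le> ereal U'
      \<and> Xn t i x v X V j = (?al / ?p) * psr j (vt t x v j) + (1 - ?al / ?p) * U'"
    proof (cases "As t > 0")
      case True
      obtain u U where rx: "x $ j = ?mu * v $ j + (1 - ?mu) * u" and hu: "\<psi> j u \<le> ereal U"
        and rX: "X j = ?mu * V j + (1 - ?mu) * U" and hv: "\<psi> j (v $ j) \<le> ereal (V j)"
        using I True unfolding Inv_def by blast
      show ?thesis unfolding xnj Xnj
        by (rule trans_sampled_real[OF psi_convex al_pos al_le1 be_nonneg be_lt1 mu0 mu1 p_pos al_le_p[OF Rj] qp N rx hu hv rX wr Wd hvt])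
    next
      case False
      have a1: "?al = 1" by (rule al_eq1[OF False])
      have p1: "?p = 1" using al_le_p[OF Rj, of t] p_le1[of j] a1 by simp
      show ?thesis
        by (intro exI[of _ "vt t x v j"] exI[of _ "psr j (vt t x v j)"] conjI hvt) (simp_all add: xnj Xnj a1 p1)
    qed
    show ?thesis unfolding Inv_def
    proof (intro conjI impI)
      show "mlow (Suc t) j \<le> mun t i mu j" by (simp add: mun mlow_def)
      show "mun t i mu j \<le> 1" using al_le_p[OF Rj, of t] p_pos[of j] by (simp add: mun)
      show "\<psi> j (vn t x v i $ j) \<le> ereal (Vn t i x v X V j)" by (simp add: vnj Vnj hvt)
      show "\<exists>u U. xn t x v i $ j = mun t i mu j * vn t x v i $ j + (1 - mun t i mu j) * u \<and>
          \<psi> j u \<le> ereal U \<and> Xn t i x v X V j = mun t i mu j * Vn t i x v X V j + (1 - mun t i mu j) * U"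
        using ex by (simp add: mun vnj Vnj)
    qed
  next
    case False
    have ji: "i \<noteq> j" using False by simp
    have At: "As t > 0"
    proof (rule ccontr)
      assume "\<not> As t > 0"
      then have "?al = 1" by (rule al_eq1)
      then have "?p = 1" using al_le_p[OF Rj, of t] p_le1[of j] by simp
      with p_lt1[OF ji] show False by simp
    qed
    define k where "k = (1 - ?be) + ?be * (1 - ?al) * ?mu"
    have mun: "mun t i mu j = ?al + (1 - ?al) * ?mu * (1 - ?al * ?be) / k"
      using False by (simp add: mun_def k_def)
    have vnj: "vn t x v i $ j = wv t x v $ j" using False by (simp add: vn_comp)
    have Vnj: "Vn t i x v X V j = Wh t X V j" using False by (simp add: Vn_def)
    have xnj: "xn t x v i $ j = (1 - ?al) * x $ j + ?al * wv t x v $ j"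
      using False by (simp add: xn_comp yv_comp)
    have Xnj: "Xn t i x v X V j = (1 - ?al) * X j + ?al * Wh t X V j"
      using False by (simp add: Xn_def)
    obtain u U where rx: "x $ j = ?mu * v $ j + (1 - ?mu) * u" and hu: "\<psi> j u \<le> ereal U"
      and rX: "X j = ?mu * V j + (1 - ?mu) * U" and hv: "\<psi> j (v $ j) \<le> ereal (V j)"
      using I At unfolding Inv_def by blast
    note tu = trans_unsampled_real[OF psi_convex al_pos al_le1 be_nonneg be_lt1 mu0 mu1 rx hu hv rX wr Wd]
    note um = unsampled_mu[OF N be_nonneg be_lt1 al_pos al_le1 mu0 mu1 p_pos]
    show ?thesis unfolding Inv_def
    proof (intro conjI impI)
      show "mlow (Suc t) j \<le> mun t i mu j" using um(2) by (simp add: mun mlow_def k_def)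
      show "mun t i mu j \<le> 1" using um(3) by (simp add: mun k_def)
      show "\<psi> j (vn t x v i $ j) \<le> ereal (Vn t i x v X V j)" using tu(1) by (simp add: vnj Vnj)
      show "\<exists>u U. xn t x v i $ j = mun t i mu j * vn t x v i $ j + (1 - mun t i mu j) * u \<and>
          \<psi> j u \<le> ereal U \<and> Xn t i x v X V j = mun t i mu j * Vn t i x v X V j + (1 - mun t i mu j) * U"
        using tu(2,3) hu by (intro exI[of _ u] exI[of _ U]) (simp add: mun vnj Vnj xnj Xnj k_def)
    qed
  qed
qed

end


lemma finite_paths: "finite (paths t :: (nat \<Rightarrow> 'd::finite) set)"
  unfolding paths_def by (rule finite_PiE) auto

lemma sum_paths_Suc:
  fixes h :: "(nat \<Rightarrow> 'd::finite) \<Rightarrow> real"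
  shows "(\<Sum>om\<in>paths (Suc t). h om) = (\<Sum>om\<in>paths t. \<Sum>i\<in>UNIV. h (om(t := i)))"
proof -
  have eq: "paths (Suc t) = (\<lambda>(y, g). g(t := y)) ` (UNIV \<times> (paths t :: (nat \<Rightarrow> 'd) set))"
    unfolding paths_def lessThan_Suc by (rule PiE_insert_eq)
  have inj: "inj_on (\<lambda>(y, g). g(t := y)) (UNIV \<times> (paths t :: (nat \<Rightarrow> 'd) set))"
    unfolding paths_def by (rule inj_combinator) simp
  have "(\<Sum>om\<in>paths (Suc t). h om) = (\<Sum>(y, g)\<in>UNIV \<times> paths t. h (g(t := y)))"
    unfolding eq by (subst sum.reindex[OF inj]) (simp add: case_prod_unfold)
  also have "\<dots> = (\<Sum>y\<in>UNIV. \<Sum>g\<in>paths t. h (g(t := y)))"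
    by (rule sum.cartesian_product[symmetric])
  also have "\<dots> = (\<Sum>g\<in>paths t. \<Sum>y\<in>UNIV. h (g(t := y)))" by (rule sum.swap)
  finally show ?thesis .
qed

lemma path_prob_upd: "path_prob p (Suc t) (om(t := i)) = path_prob p t om * p i"
proof -
  have "path_prob p (Suc t) (om(t := i)) = (\<Prod>j<t. p ((om(t := i)) j)) * p i"
    unfolding path_prob_def by simp
  also have "(\<Prod>j<t. p ((om(t := i)) j)) = path_prob p t om"
    unfolding path_prob_def by (intro prod.cong) auto
  finally show ?thesis .
qed

lemma path_prob_nonneg: "(\<And>i. p i > 0) \<Longrightarrow> path_prob p t om \<ge> 0"
  unfolding path_prob_def by (intro prod_nonneg) (auto intro: less_imp_le)

lemma paths_0: "paths 0 = {\<lambda>_. undefined}" unfolding paths_def by simp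

context apcg_ctx begin

lemma run_cong: "(\<And>j. j < t \<Longrightarrow> om j = om' j) \<Longrightarrow> run om t = run om' t \<and> hrun om t = hrun om' t"
proof (induction t)
  case 0 then show ?case by simp
next
  case (Suc t)
  then have "run om t = run om' t \<and> hrun om t = hrun om' t" by simp
  moreover have "om t = om' t" using Suc.prems by simp
  ultimately show ?case by (simp add: run_Suc)
qed

lemma run_upd: "run (om(t := i)) t = run om t" and hrun_upd: "hrun (om(t := i)) t = hrun om t"
  using run_cong[of t "om(t := i)" om] by auto

lemma prob_sum: "(\<Sum>om\<in>paths t. path_prob p t om) = 1"
proof (induction t)
  case 0 then show ?case by (simp add: paths_0 path_prob_def)
next
  case (Suc t)
  have "(\<Sum>om\<in>paths (Suc t). path_prob p (Suc t) om) = (\<Sum>om\<in>paths t. \<Sum>i\<in>UNIV. path_prob p t om * p i)"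
    by (simp add: sum_paths_Suc path_prob_upd)
  also have "\<dots> = (\<Sum>om\<in>paths t. path_prob p t om)" by (simp add: sum_distrib_left[symmetric] p_sum)
  finally show ?case using Suc by simp
qed

definition EPhi where "EPhi t = (\<Sum>om\<in>paths t. path_prob p t om *
   Phi t (fst (run om t)) (snd (run om t)) (fst (snd (hrun om t))))"

lemma EPhi_step: "EPhi (Suc t) \<le> EPhi t"
proof -
  have "EPhi (Suc t) = (\<Sum>om\<in>paths t. path_prob p t om * (\<Sum>i\<in>UNIV. p i *
       Phi (Suc t) (xn t (fst (run om t)) (snd (run om t)) i) (vn t (fst (run om t)) (snd (run om t)) i)
         (Xn t i (fst (run om t)) (snd (run om t)) (fst (snd (hrun om t))) (snd (snd (hrun om t))))))"
    unfolding EPhi_def sum_paths_Suc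
    by (intro sum.cong refl) (simp del: apcg_run.simps add: path_prob_upd run_Suc run_upd hrun_upd sum_distrib_left algebra_simps)
  also have "\<dots> \<le> (\<Sum>om\<in>paths t. path_prob p t om * Phi t (fst (run om t)) (snd (run om t)) (fst (snd (hrun om t))))"
    by (intro sum_mono mult_left_mono one_step path_prob_nonneg p_pos)
  finally show ?thesis unfolding EPhi_def .
qed

lemma EPhi_bound: "EPhi t \<le> EPhi 0"
  by (induction t) (auto intro: order_trans[OF EPhi_step])

lemma EPhi_0: "EPhi 0 = Phi 0 0 0 (\<lambda>j. psr j 0)"
  unfolding EPhi_def by (simp add: paths_0 path_prob_def)

lemma Inv_run:
  assumes Rj: "R j = 1" and H0: "As 0 > 0 \<Longrightarrow> \<psi> j 0 \<noteq> \<infinity>"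
  shows "Inv t j (fst (run om t)) (snd (run om t)) (fst (hrun om t)) (fst (snd (hrun om t))) (snd (snd (hrun om t)))"
proof (induction t)
  case 0
  show ?case unfolding Inv_def
  proof (intro conjI impI)
    show "mlow 0 j \<le> fst (hrun om 0) j" by (simp add: mlow_def)
    show "fst (hrun om 0) j \<le> 1" by simp
    assume "As 0 > 0"
    then have f: "\<psi> j 0 \<le> ereal (psr j 0)" using H0 psr_le by blast
    then show "\<psi> j (snd (run om 0) $ j) \<le> ereal (snd (snd (hrun om 0)) j)" by simp
    show "\<exists>u U. fst (run om 0) $ j = fst (hrun om 0) j * snd (run om 0) $ j + (1 - fst (hrun om 0) j) * u \<and>
        \<psi> j u \<le> ereal U \<and> fst (snd (hrun om 0)) j = fst (hrun om 0) j * snd (snd (hrun om 0)) j + (1 - fst (hrun om 0) j) * U"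
      using f by (intro exI[of _ 0] exI[of _ "psr j 0"]) simp
  qed
next
  case (Suc t)
  show ?case using Inv_step[OF Rj Suc.IH, of "om t"] by (simp del: apcg_run.simps add: run_Suc)
qed

lemma zero_hats:
  assumes z: "\<psi> j = (\<lambda>_. 0)"
  shows "fst (snd (hrun om t)) j = 0 \<and> snd (snd (hrun om t)) j = 0"
proof (induction t)
  case 0 then show ?case by (simp add: psr_def z)
next
  case (Suc t)
  show ?case
  proof (cases "j = om t")
    case True
    then have z': "\<psi> (om t) = (\<lambda>_. 0)" using z by simp
    show ?thesis using Suc True by (simp add: Xn_def Vn_def Wh_def psr_def z')
  next
    case False
    show ?thesis using Suc False by (simp add: Xn_def Vn_def Wh_def)
  qed
qed

lemma hat_bound:
  assumes H0: "As 0 > 0 \<Longrightarrow> (\<forall>j. \<psi> j 0 \<noteq> \<infinity>)" and At: "As t > 0"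
  shows "\<psi> j (fst (run om t) $ j) \<le> ereal (fst (snd (hrun om t)) j)"
proof (cases "R j = 1")
  case True
  have I: "Inv t j (fst (run om t)) (snd (run om t)) (fst (hrun om t)) (fst (snd (hrun om t))) (snd (snd (hrun om t)))"
    by (rule Inv_run[OF True]) (use H0 in blast)
  let ?mu = "fst (hrun om t) j"
  have m: "0 \<le> ?mu" "?mu \<le> 1" using I mlow_pos[of t j] unfolding Inv_def by auto
  obtain u U where rx: "fst (run om t) $ j = ?mu * snd (run om t) $ j + (1 - ?mu) * u" and hu: "\<psi> j u \<le> ereal U"
    and rX: "fst (snd (hrun om t)) j = ?mu * snd (snd (hrun om t)) j + (1 - ?mu) * U"
    and hv: "\<psi> j (snd (run om t) $ j) \<le> ereal (snd (snd (hrun om t)) j)"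
    using I At unfolding Inv_def by blast
  show ?thesis unfolding rx rX by (rule conv2[OF psi_convex m hv hu])
next
  case False
  then have z: "\<psi> j = (\<lambda>_. 0)" using R_or_zero by blast
  show ?thesis using zero_hats[OF z, of om t] z by simp
qed

end


context apcg_ctx begin

lemma F_fin:
  assumes fin: "\<And>j. \<psi> j (x $ j) \<noteq> \<infinity>"
  shows "F x = ereal (f x + (\<Sum>j\<in>UNIV. psr j (x $ j)))"
proof -
  have "(\<Sum>j\<in>UNIV. \<psi> j (x $ j)) = (\<Sum>j\<in>UNIV. ereal (psr j (x $ j)))"
    by (rule sum.cong) (simp_all add: psr_eq fin)
  then show ?thesis unfolding F_def by simp
qed

lemma F_le_hat:
  assumes "\<And>j. \<psi> j (x $ j) \<le> ereal (X j)"
  shows "F x \<le> ereal (f x + (\<Sum>j\<in>UNIV. X j))"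
proof -
  have "(\<Sum>j\<in>UNIV. \<psi> j (x $ j)) \<le> (\<Sum>j\<in>UNIV. ereal (X j))" by (rule sum_mono) (rule assms)
  then have "F x \<le> ereal (f x) + (\<Sum>j\<in>UNIV. ereal (X j))" unfolding F_def by (rule add_left_mono)
  then show ?thesis by simp
qed

lemma final:
  "ereal (Bs t * (\<Sum>om\<in>paths t. path_prob p t om * sqnorm_P P (snd (run om t) - \<theta>)))
     + ereal (2 * As t) * ((\<Sum>om\<in>paths t. ereal (path_prob p t om) * F (fst (run om t))) - F \<theta>)
   \<le> ereal (Bs 0 * (norm ((0::real^'d) - \<theta>))^2) + ereal (2 * As 0) * (F 0 - F \<theta>)"
proof (cases "As 0 > 0 \<and> (\<exists>j. \<psi> j 0 = \<infinity>)")
  case True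
  then obtain j where A0p: "As 0 > 0" and j: "\<psi> j 0 = \<infinity>" by blast
  have "(\<Sum>i\<in>UNIV. \<psi> i ((0::real^'d) $ i)) = \<infinity>" using j by (auto simp: sum_Pinfty)
  then have "F 0 = \<infinity>" unfolding F_def by simp
  then have "F 0 - F \<theta> = \<infinity>" using F_theta by simp
  then have inf: "ereal (2 * As 0) * (F 0 - F \<theta>) = \<infinity>" using A0p by simp
  show ?thesis unfolding inf by simp
next
  case False
  then have H0: "As 0 > 0 \<Longrightarrow> (\<forall>j. \<psi> j 0 \<noteq> \<infinity>)" by blast
  show ?thesis
  proof (cases t)
    case 0
    have "sqnorm_P P (0 - \<theta>) \<le> (norm ((0::real^'d) - \<theta>))^2" by (rule sq_le_norm)
    then have "Bs 0 * sqnorm_P P (0 - \<theta>) \<le> Bs 0 * (norm ((0::real^'d) - \<theta>))^2"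
      using Bs_pos[of 0] by (intro mult_left_mono) auto
    then have h: "ereal (Bs 0 * sqnorm_P P (0 - \<theta>)) \<le> ereal (Bs 0 * (norm ((0::real^'d) - \<theta>))^2)" by simp
    show ?thesis unfolding 0 using add_right_mono[OF h, of "ereal (2 * As 0) * (F 0 - F \<theta>)"]
      by (simp add: paths_0 path_prob_def)
  next
    case (Suc s)
    have At: "As t > 0" unfolding Suc by (rule As_Suc_pos)
    let ?x = "\<lambda>om. fst (run om t)" and ?v = "\<lambda>om. snd (run om t)" and ?X = "\<lambda>om. fst (snd (hrun om t))"
    let ?pr = "\<lambda>om. path_prob p t om"
    have prnn: "?pr om \<ge> 0" for om by (rule path_prob_nonneg[OF p_pos])
    define Esq where "Esq = (\<Sum>om\<in>paths t. ?pr om * sqnorm_P P (?v om - \<theta>))"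
    define Ef where "Ef = (\<Sum>om\<in>paths t. ?pr om * (f (?x om) + (\<Sum>j\<in>UNIV. ?X om j)))"
    have Fle: "F (?x om) \<le> ereal (f (?x om) + (\<Sum>j\<in>UNIV. ?X om j))" for om
      by (rule F_le_hat) (rule hat_bound[OF H0 At])
    have S: "(\<Sum>om\<in>paths t. ereal (?pr om) * F (?x om)) \<le> ereal Ef"
    proof -
      have "(\<Sum>om\<in>paths t. ereal (?pr om) * F (?x om)) \<le> (\<Sum>om\<in>paths t. ereal (?pr om) * ereal (f (?x om) + (\<Sum>j\<in>UNIV. ?X om j)))"
        by (intro sum_mono ereal_mult_left_mono Fle) (simp add: prnn)
      also have "\<dots> = ereal Ef" unfolding Ef_def by simp
      finally show ?thesis .
    qed
    have D: "(\<Sum>om\<in>paths t. ereal (?pr om) * F (?x om)) - F \<theta> \<le> ereal (Ef - Fs)"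
    proof -
      have "(\<Sum>om\<in>paths t. ereal (?pr om) * F (?x om)) - F \<theta> \<le> ereal Ef - ereal Fs"
        unfolding F_theta using S by (rule ereal_minus_mono) simp
      then show ?thesis by simp
    qed
    have L: "ereal (Bs t * Esq) + ereal (2 * As t) * ((\<Sum>om\<in>paths t. ereal (?pr om) * F (?x om)) - F \<theta>)
        \<le> ereal (Bs t * Esq + 2 * As t * (Ef - Fs))"
    proof -
      have "ereal (2 * As t) * ((\<Sum>om\<in>paths t. ereal (?pr om) * F (?x om)) - F \<theta>) \<le> ereal (2 * As t) * ereal (Ef - Fs)"
        using D At by (intro ereal_mult_left_mono) auto
      then have h: "ereal (2 * As t) * ((\<Sum>om\<in>paths t. ereal (?pr om) * F (?x om)) - F \<theta>) \<le> ereal (2 * As t * (Ef - Fs))"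
        by simp
      have "ereal (Bs t * Esq) + ereal (2 * As t) * ((\<Sum>om\<in>paths t. ereal (?pr om) * F (?x om)) - F \<theta>)
         \<le> ereal (Bs t * Esq) + ereal (2 * As t * (Ef - Fs))" by (rule add_left_mono[OF h])
      then show ?thesis by simp
    qed
    have EP: "EPhi t = Bs t * Esq + 2 * As t * (Ef - Fs)"
    proof -
      have "EPhi t = (\<Sum>om\<in>paths t. Bs t * (?pr om * sqnorm_P P (?v om - \<theta>)) + 2 * As t * (?pr om * (f (?x om) + (\<Sum>j\<in>UNIV. ?X om j))) - 2 * As t * Fs * ?pr om)"
        unfolding EPhi_def Phi_def by (intro sum.cong refl) (simp add: algebra_simps)
      also have "\<dots> = Bs t * Esq + 2 * As t * Ef - 2 * As t * Fs * (\<Sum>om\<in>paths t. ?pr om)"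
        unfolding Esq_def Ef_def by (simp add: sum.distrib sum_subtractf sum_distrib_left)
      also have "\<dots> = Bs t * Esq + 2 * As t * (Ef - Fs)" by (simp add: prob_sum algebra_simps)
      finally show ?thesis .
    qed
    have E0: "EPhi 0 = Bs 0 * sqnorm_P P (0 - \<theta>) + 2 * As 0 * (f 0 + (\<Sum>j\<in>UNIV. psr j 0) - Fs)"
      unfolding EPhi_0 Phi_def ..
    have sqb: "Bs 0 * sqnorm_P P (0 - \<theta>) \<le> Bs 0 * (norm ((0::real^'d) - \<theta>))^2"
      using sq_le_norm[of "0 - \<theta>"] Bs_pos[of 0] by (intro mult_left_mono) auto
    have R: "ereal (EPhi 0) \<le> ereal (Bs 0 * (norm ((0::real^'d) - \<theta>))^2) + ereal (2 * As 0) * (F 0 - F \<theta>)"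
    proof (cases "As 0 > 0")
      case True
      then have fin: "\<psi> j ((0::real^'d) $ j) \<noteq> \<infinity>" for j using H0 by simp
      have "F 0 = ereal (f 0 + (\<Sum>j\<in>UNIV. psr j 0))" using F_fin[OF fin] by simp
      then have "ereal (Bs 0 * (norm ((0::real^'d) - \<theta>))^2) + ereal (2 * As 0) * (F 0 - F \<theta>)
          = ereal (Bs 0 * (norm ((0::real^'d) - \<theta>))^2 + 2 * As 0 * (f 0 + (\<Sum>j\<in>UNIV. psr j 0) - Fs))"
        by (simp add: F_theta)
      then show ?thesis using E0 sqb by simp
    next
      case False
      then have "As 0 = 0" using As_nonneg[of 0] by simp
      then show ?thesis using E0 sqb by (simp add: zero_ereal_def[symmetric])
    qed
    have c2: "ereal (EPhi t) \<le> ereal (EPhi 0)" using EPhi_bound by simp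
    have c1: "ereal (Bs t * Esq) + ereal (2 * As t) * ((\<Sum>om\<in>paths t. ereal (?pr om) * F (?x om)) - F \<theta>) \<le> ereal (EPhi t)"
      unfolding EP by (rule L)
    show ?thesis unfolding Esq_def[symmetric] using order_trans[OF c1 order_trans[OF c2 R]] .
  qed
qed

end

theorem theorem4:
  fixes A :: "real^'d::finite^'m::finite"
    and f :: "real^'d \<Rightarrow> real" and grad :: "real^'d \<Rightarrow> real^'d"
    and \<psi> :: "'d \<Rightarrow> real \<Rightarrow> ereal"
    and \<sigma> S :: real and M p :: "'d \<Rightarrow> real"
    and a As Bs :: "nat \<Rightarrow> real"
    and \<theta> :: "real^'d"
    and F :: "real^'d \<Rightarrow> ereal" and P :: "real^'d^'d" and R :: "'d \<Rightarrow> real"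
  defines "P \<equiv> pseudo_inverse A ** A"
    and "R \<equiv> (\<lambda>i. P $ i $ i)"
    and "F \<equiv> (\<lambda>x. ereal (f x) + (\<Sum>i\<in>UNIV. \<psi> i (x $ i)))"
  assumes grad: "\<And>x. (f has_derivative (\<lambda>h. grad x \<bullet> h)) (at x)"
    and sigma_nonneg: "\<sigma> \<ge> 0"
    and strong: "\<And>x y. f x - f y \<ge> grad y \<bullet> (P *v (x - y)) + \<sigma> / 2 * ((x - y) \<bullet> (P *v (x - y)))"
    and smooth: "\<And>i x h. \<bar>grad (x + h *\<^sub>R axis i 1) $ i - grad x $ i\<bar> \<le> M i * \<bar>h\<bar>"
    and psi_convex: "\<And>i. convex_ext (\<psi> i)"
    and prox_exists: "\<And>i \<eta> z. \<eta> > 0 \<Longrightarrow> \<exists>v. is_prox \<eta> (\<psi> i) z v"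
    and R_or_zero: "\<And>i. R i = 1 \<or> \<psi> i = (\<lambda>_. 0)"
    and p_pos: "\<And>i. p i > 0" and p_sum: "(\<Sum>i\<in>UNIV. p i) = 1"
    and A0: "As 0 \<ge> 0" and B0: "Bs 0 > 0" and S_pos: "S > 0"
    and a_pos: "\<And>t. a (Suc t) > 0"
    and a_eq: "\<And>t. (a (Suc t))^2 * S^2 = As (Suc t) * Bs (Suc t)"
    and As_rec: "\<And>t. As (Suc t) = As t + a (Suc t)"
    and Bs_rec: "\<And>t. Bs (Suc t) = Bs t + \<sigma> * a (Suc t)"
    and minimizer: "\<And>x. F \<theta> \<le> F x" and finite_min: "F \<theta> \<noteq> \<infinity>"
    and S_cond: "\<And>i. S^2 \<ge> M i * R i / (p i)^2"
    and step_cond: "\<And>i t. 1 - \<sigma> * a (Suc t) / Bs (Suc t) - (a (Suc t) / As (Suc t)) * R i / p i \<ge> 0"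
  shows "ereal (Bs t * (\<Sum>\<omega>\<in>paths t. path_prob p t \<omega> *
              sqnorm_P P (snd (apcg_run grad P p \<psi> a As Bs \<sigma> \<omega> t) - \<theta>)))
         + ereal (2 * As t) *
           ((\<Sum>\<omega>\<in>paths t. ereal (path_prob p t \<omega>) * F (fst (apcg_run grad P p \<psi> a As Bs \<sigma> \<omega> t)))
            - F \<theta>)
         \<le> ereal (Bs 0 * (norm ((0::real^'d) - \<theta>))^2) + ereal (2 * As 0) * (F 0 - F \<theta>)"
proof -
  interpret apcg_ctx A f grad \<psi> \<sigma> S M p a As Bs \<theta> F P R
  proof (unfold_locales)
    show "P = pseudo_inverse A ** A" using \<open>P \<equiv> pseudo_inverse A ** A\<close> by simp
    show "R = (\<lambda>i. P $ i $ i)" using \<open>R \<equiv> (\<lambda>i. P $ i $ i)\<close> by simp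
    show "F = (\<lambda>x. ereal (f x) + (\<Sum>i\<in>UNIV. \<psi> i (x $ i)))"
      using \<open>F \<equiv> (\<lambda>x. ereal (f x) + (\<Sum>i\<in>UNIV. \<psi> i (x $ i)))\<close> by simp
  qed (use assms in auto)
  show ?thesis by (rule final)
qed

end
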